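(* Let $n\geq 3$ and let $G\subset S_1\times S_{n-1}$ be a subgroup. Then there exists an acyclic matching on the face poset of the quotient $\Delta(\overline{\Pi}_n)/G$ such that the set of critical simplices consists of the $G$-orbits of the simplices in $C_n$ together with the orbit of $\alpha_n$.
   Context: $\overline{\Pi}_n$ is the poset of set partitions of $[n]$ ordered by refinement (finer is smaller) with minimum and maximum removed. $\Delta(\overline{\Pi}_n)$ is its order complex (simplices are nonempty chains; dimension of a chain with $k+1$ elements is $k$). $S_n$ acts naturally; $S_1\times S_{n-1}=\{\sigma\in S_n\mid\sigma(1)=1\}$. The face poset of $\Delta(\overline{\Pi}_n)/G$ is the set of $G$-orbits $[\sigma]$ of simplices, with $[\sigma]\le[\tau]$ iff $\sigma\subseteq g\tau$ for some $g\in G$. $A$ is the set of partitions in $\overline{\Pi}_n$ all of whose blocks not containing $1$ are singletons; $C_n$ is the set of $(n-3)$-dimensional simplices all of whose vertices lie in $A$; $\alpha_n$ is the vertex $\{\{1\},\{2,\dots,n\}\}$. A partial matching on a poset is a set of pairs $(a,b)$ with $b$ covering $a$, each element in at most one pair; it is acyclic if there is no cycle $b_1>a_1<b_2>\dots<b_t>a_t<b_1$, $t\ge2$, with distinct $b_i$ and matched $(a_i,b_i)$; critical elements are the unmatched ones. *)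

theory Defs
  imports "HOL-Library.Disjoint_Sets" "HOL-Combinatorics.Permutations"
begin

type_synonym partition = "nat set set"
type_synonym simplex = "nat set set set"

definition refines :: "partition \<Rightarrow> partition \<Rightarrow> bool" where
  "refines P Q \<longleftrightarrow> (\<forall>B\<in>P. \<exists>C\<in>Q. B \<subseteq> C)"

definition proper_partition :: "nat \<Rightarrow> partition \<Rightarrow> bool" where
  "proper_partition n P \<longleftrightarrow> partition_on {1..n} P
     \<and> P \<noteq> (\<lambda>i. {i}) ` {1..n} \<and> P \<noteq> {{1..n}}"

definition simplex :: "nat \<Rightarrow> simplex \<Rightarrow> bool" where
  "simplex n \<sigma> \<longleftrightarrow> \<sigma> \<noteq> {} \<and> finite \<sigma> \<and> (\<forall>P\<in>\<sigma>. proper_partition n P)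
     \<and> (\<forall>P\<in>\<sigma>. \<forall>Q\<in>\<sigma>. refines P Q \<or> refines Q P)"

definition simplex_dim :: "simplex \<Rightarrow> nat" where
  "simplex_dim \<sigma> = card \<sigma> - 1"

definition act_part :: "(nat \<Rightarrow> nat) \<Rightarrow> partition \<Rightarrow> partition" where
  "act_part g P = (\<lambda>B. g ` B) ` P"

definition act_simp :: "(nat \<Rightarrow> nat) \<Rightarrow> simplex \<Rightarrow> simplex" where
  "act_simp g \<sigma> = act_part g ` \<sigma>"

text \<open>G is a subgroup of S_1 x S_{n-1} = permutations of [n] fixing 1.\<close>
definition subgroup_S1_Snm1 :: "nat \<Rightarrow> (nat \<Rightarrow> nat) set \<Rightarrow> bool" where
  "subgroup_S1_Snm1 n G \<longleftrightarrow> id \<in> G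
     \<and> (\<forall>g\<in>G. g permutes {1..n} \<and> g 1 = 1)
     \<and> (\<forall>g\<in>G. \<forall>h\<in>G. g \<circ> h \<in> G)
     \<and> (\<forall>g\<in>G. inv g \<in> G)"

definition orbit :: "(nat \<Rightarrow> nat) set \<Rightarrow> simplex \<Rightarrow> simplex set" where
  "orbit G \<sigma> = (\<lambda>g. act_simp g \<sigma>) ` G"

definition quot_faces :: "nat \<Rightarrow> (nat \<Rightarrow> nat) set \<Rightarrow> simplex set set" where
  "quot_faces n G = {orbit G \<sigma> | \<sigma>. simplex n \<sigma>}"

definition quot_le :: "(nat \<Rightarrow> nat) set \<Rightarrow> simplex set \<Rightarrow> simplex set \<Rightarrow> bool" where
  "quot_le G X Y \<longleftrightarrow> (\<exists>\<sigma>\<in>X. \<exists>\<tau>\<in>Y. \<exists>g\<in>G. \<sigma> \<subseteq> act_simp g \<tau>)"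

definition quot_less :: "(nat \<Rightarrow> nat) set \<Rightarrow> simplex set \<Rightarrow> simplex set \<Rightarrow> bool" where
  "quot_less G X Y \<longleftrightarrow> quot_le G X Y \<and> X \<noteq> Y"

definition covers :: "'a set \<Rightarrow> ('a \<Rightarrow> 'a \<Rightarrow> bool) \<Rightarrow> 'a \<Rightarrow> 'a \<Rightarrow> bool" where
  "covers S lt b a \<longleftrightarrow> a \<in> S \<and> b \<in> S \<and> lt a b \<and> \<not> (\<exists>c\<in>S. lt a c \<and> lt c b)"

definition partial_matching :: "'a set \<Rightarrow> ('a \<Rightarrow> 'a \<Rightarrow> bool) \<Rightarrow> ('a \<times> 'a) set \<Rightarrow> bool" where
  "partial_matching S lt M \<longleftrightarrow>
     (\<forall>(a, b)\<in>M. covers S lt b a)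
     \<and> (\<forall>p\<in>M. \<forall>q\<in>M. p \<noteq> q \<longrightarrow>
          {fst p, snd p} \<inter> {fst q, snd q} = {})"

definition acyclic_matching :: "'a set \<Rightarrow> ('a \<Rightarrow> 'a \<Rightarrow> bool) \<Rightarrow> ('a \<times> 'a) set \<Rightarrow> bool" where
  "acyclic_matching S lt M \<longleftrightarrow> partial_matching S lt M \<and>
     \<not> (\<exists>t a b. t \<ge> 2 \<and> inj_on b {..<t}
          \<and> (\<forall>i<t. (a i, b i) \<in> M \<and> lt (a i) (b (Suc i mod t))))"

definition critical :: "'a set \<Rightarrow> ('a \<times> 'a) set \<Rightarrow> 'a set" where
  "critical S M = {x \<in> S. \<forall>(a, b)\<in>M. x \<noteq> a \<and> x \<noteq> b}"

definition setA :: "nat \<Rightarrow> partition set" where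
  "setA n = {P. proper_partition n P \<and> (\<forall>B\<in>P. 1 \<notin> B \<longrightarrow> card B = 1)}"

definition C_simp :: "nat \<Rightarrow> simplex set" where
  "C_simp n = {\<sigma>. simplex n \<sigma> \<and> simplex_dim \<sigma> = n - 3 \<and> \<sigma> \<subseteq> setA n}"

definition alpha :: "nat \<Rightarrow> partition" where
  "alpha n = {{1}, {2..n}}"

end

theory Submission
  imports Defs
begin

declare One_nat_def[simp del]

definition bot0 :: "nat \<Rightarrow> partition" where "bot0 n = (\<lambda>i. {i}) ` {1..n}"
definition zeroC :: "nat \<Rightarrow> nat set \<Rightarrow> partition" where
  "zeroC n D = insert D ((\<lambda>x. {x}) ` ({1..n} - D))"
definition alphaC :: "nat \<Rightarrow> nat set \<Rightarrow> partition" where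
  "alphaC n C = {C, {1..n} - C}"
definition blk :: "partition \<Rightarrow> nat set" where
  "blk P = (THE B. B \<in> P \<and> 1 \<in> B)"
definition splitC :: "partition \<Rightarrow> nat set \<Rightarrow> partition" where
  "splitC P C = insert C (insert (blk P - C) (P - {blk P}))"

lemma part_unique:
  assumes "partition_on X P" "B \<in> P" "B' \<in> P" "x \<in> B" "x \<in> B'"
  shows "B = B'"
  using assms unfolding partition_on_def disjoint_def by blast

lemma part_ex:
  assumes "partition_on X P" "x \<in> X"
  shows "\<exists>B\<in>P. x \<in> B"
  using assms unfolding partition_on_def by blast

lemma part_sub:
  assumes "partition_on X P" "B \<in> P" shows "B \<subseteq> X"
  using assms unfolding partition_on_def by blast

lemma part_ne:
  assumes "partition_on X P" "B \<in> P" shows "B \<noteq> {}"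
  using assms unfolding partition_on_def by blast

lemma blk_eq:
  assumes "partition_on X P" "B \<in> P" "1 \<in> B"
  shows "blk P = B"
  unfolding blk_def
proof (rule the_equality)
  show "B \<in> P \<and> 1 \<in> B" using assms by simp
  fix B' assume "B' \<in> P \<and> 1 \<in> B'"
  then show "B' = B" using part_unique[OF assms(1), of B' B 1] assms by simp
qed

lemma blk_mem:
  assumes "partition_on X P" "1 \<in> X"
  shows "blk P \<in> P \<and> 1 \<in> blk P"
proof -
  obtain B where B: "B \<in> P" "1 \<in> B" using part_ex[OF assms] by blast
  have "blk P = B" using blk_eq[OF assms(1) B] .
  then show ?thesis using B by simp
qed

lemma refines_trans: "refines P Q \<Longrightarrow> refines Q R \<Longrightarrow> refines P R"
  unfolding refines_def by (meson order_trans)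

lemma refines_refl: "refines P P"
  unfolding refines_def by blast

lemma refines_antisym:
  assumes "partition_on X P" "partition_on X Q" "refines P Q" "refines Q P"
  shows "P = Q"
proof -
  have *: "P' \<subseteq> Q'" if h1: "partition_on X P'" and h2: "partition_on X Q'" and h3: "refines P' Q'" and h4: "refines Q' P'" for P' Q'
  proof
    fix B assume B: "B \<in> P'"
    then obtain C where C: "C \<in> Q'" "B \<subseteq> C" using h3 unfolding refines_def by blast
    then obtain B' where B': "B' \<in> P'" "C \<subseteq> B'" using h4 unfolding refines_def by blast
    obtain x where x: "x \<in> B" using part_ne[OF h1 B] by blast
    have xB': "x \<in> B'" using x C(2) B'(2) by blast
    have "B = B'" using part_unique[OF h1 B B'(1) x xB'] .
    then have "B = C" using C(2) B'(2) by blast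
    then show "B \<in> Q'" using C(1) by simp
  qed
  show ?thesis using *[OF assms] *[OF assms(2,1,4,3)] by blast
qed

lemma refines_blk:
  assumes "partition_on X P" "partition_on X Q" "1 \<in> X" "refines P Q"
  shows "blk P \<subseteq> blk Q"
proof -
  obtain C where C: "C \<in> Q" "blk P \<subseteq> C" using assms(4) blk_mem[OF assms(1,3)] unfolding refines_def by blast
  then have "blk Q = C" using blk_eq[OF assms(2) C(1)] blk_mem[OF assms(1,3)] by blast
  then show ?thesis using C by simp
qed

lemma refines_card_le:
  assumes "partition_on X P" "partition_on X Q" "refines P Q" "finite X"
  shows "card Q \<le> card P"
proof -
  define f where "f B = (SOME C. C \<in> Q \<and> B \<subseteq> C)" for B
  have f: "f B \<in> Q \<and> B \<subseteq> f B" if "B \<in> P" for B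
    unfolding f_def using assms(3) that unfolding refines_def by (metis (mono_tags, lifting) someI_ex)
  have "Q \<subseteq> f ` P"
  proof
    fix C assume C: "C \<in> Q"
    obtain x where x: "x \<in> C" using part_ne[OF assms(2) C] by blast
    have "x \<in> X" using part_sub[OF assms(2) C] x by blast
    then obtain B where B: "B \<in> P" "x \<in> B" using part_ex[OF assms(1)] by blast
    have "f B = C" using part_unique[OF assms(2) C, of "f B" x] f[OF B(1)] B(2) x by blast
    then show "C \<in> f ` P" using B by blast
  qed
  moreover have "finite P" using finite_elements[OF assms(4,1)] .
  ultimately show ?thesis by (meson card_image_le card_mono finite_imageI order_trans)
qed

lemma refines_card_less:
  assumes "partition_on X P" "partition_on X Q" "refines P Q" "finite X" "P \<noteq> Q"
  shows "card Q < card P"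
proof (rule ccontr)
  assume "\<not> card Q < card P"
  then have eq: "card Q = card P" using refines_card_le[OF assms(1-4)] by simp
  define f where "f B = (SOME C. C \<in> Q \<and> B \<subseteq> C)" for B
  have f: "f B \<in> Q \<and> B \<subseteq> f B" if "B \<in> P" for B
    unfolding f_def using assms(3) that unfolding refines_def by (metis (mono_tags, lifting) someI_ex)
  have fP: "f ` P = Q"
  proof
    show "f ` P \<subseteq> Q" using f by blast
    show "Q \<subseteq> f ` P"
    proof
      fix C assume C: "C \<in> Q"
      obtain x where x: "x \<in> C" using part_ne[OF assms(2) C] by blast
      have "x \<in> X" using part_sub[OF assms(2) C] x by blast
      then obtain B where B: "B \<in> P" "x \<in> B" using part_ex[OF assms(1)] by blast
      have "f B = C" using part_unique[OF assms(2) C, of "f B" x] f[OF B(1)] B(2) x by blast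
      then show "C \<in> f ` P" using B by blast
    qed
  qed
  have finP: "finite P" using finite_elements[OF assms(4,1)] .
  have inj: "inj_on f P"
    using eq fP finP by (metis card_image_le eq_card_imp_inj_on)
  have "refines Q P"
    unfolding refines_def
  proof
    fix C assume C: "C \<in> Q"
    then obtain B where B: "B \<in> P" "f B = C" using fP by blast
    have "C \<subseteq> B"
    proof
      fix x assume x: "x \<in> C"
      have "x \<in> X" using part_sub[OF assms(2) C] x by blast
      then obtain B' where B': "B' \<in> P" "x \<in> B'" using part_ex[OF assms(1)] by blast
      have "f B' = C" using part_unique[OF assms(2) C, of "f B'" x] f[OF B'(1)] B'(2) x by blast
      then have "B' = B" using inj B B' unfolding inj_on_def by metis
      then show "x \<in> B" using B' by simp
    qed
    then show "\<exists>B\<in>P. C \<subseteq> B" using B by blast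
  qed
  then show False using refines_antisym[OF assms(1,2,3)] assms(5) by blast
qed


context fixes n :: nat assumes n3: "3 \<le> n"
begin

lemma one_in: "1 \<in> {1..n}" using n3 by simp

lemma zeroC_memE:
  assumes "B \<in> zeroC n D" "B \<noteq> D"
  shows "\<exists>x. x \<in> {1..n} \<and> x \<notin> D \<and> B = {x}"
  using assms unfolding zeroC_def by blast

lemma zeroC_part:
  assumes "1 \<in> D" "D \<subseteq> {1..n}"
  shows "partition_on {1..n} (zeroC n D)"
  unfolding partition_on_def zeroC_def disjoint_def using assms by auto

lemma blk_zeroC:
  assumes "1 \<in> D" "D \<subseteq> {1..n}"
  shows "blk (zeroC n D) = D"
proof (rule blk_eq[OF zeroC_part[OF assms]])
  show "D \<in> zeroC n D" unfolding zeroC_def by simp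
  show "1 \<in> D" using assms(1) .
qed

lemma refines_zeroC_iff:
  assumes Q: "partition_on {1..n} Q" and D: "1 \<in> D" "D \<subseteq> {1..n}"
  shows "refines (zeroC n D) Q \<longleftrightarrow> D \<subseteq> blk Q"
proof
  assume r: "refines (zeroC n D) Q"
  have "blk (zeroC n D) \<subseteq> blk Q"
    using refines_blk[OF zeroC_part[OF D] Q one_in r] .
  then show "D \<subseteq> blk Q" using blk_zeroC[OF D] by simp
next
  assume s: "D \<subseteq> blk Q"
  show "refines (zeroC n D) Q"
    unfolding refines_def
  proof
    fix B assume B: "B \<in> zeroC n D"
    show "\<exists>C\<in>Q. B \<subseteq> C"
    proof (cases "B = D")
      case True then show ?thesis using s blk_mem[OF Q one_in] by blast
    next
      case False
      then obtain x where x: "x \<in> {1..n}" "B = {x}" using zeroC_memE[OF B] by blast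
      obtain C where "C \<in> Q" "x \<in> C" using part_ex[OF Q x(1)] by blast
      then show ?thesis using x by blast
    qed
  qed
qed

lemma card_bot0: "card (bot0 n) = n"
  unfolding bot0_def by (subst card_image) (auto simp: inj_on_def)

lemma zeroC_1: "zeroC n {1} = bot0 n"
  unfolding zeroC_def bot0_def using n3 by auto

lemma zeroC_top: "zeroC n {1..n} = {{1..n}}"
  unfolding zeroC_def by auto

lemma zeroC_proper:
  assumes "1 \<in> D" "D \<subseteq> {1..n}"
  shows "proper_partition n (zeroC n D) \<longleftrightarrow> D \<noteq> {1} \<and> D \<noteq> {1..n}"
proof
  assume p: "proper_partition n (zeroC n D)"
  show "D \<noteq> {1} \<and> D \<noteq> {1..n}"
  proof
    show "D \<noteq> {1}"
    proof
      assume "D = {1}" then have "zeroC n D = bot0 n" using zeroC_1 by simp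
      then show False using p unfolding proper_partition_def bot0_def by simp
    qed
    show "D \<noteq> {1..n}"
    proof
      assume "D = {1..n}" then have "zeroC n D = {{1..n}}" using zeroC_top by simp
      then show False using p unfolding proper_partition_def by simp
    qed
  qed
next
  assume d: "D \<noteq> {1} \<and> D \<noteq> {1..n}"
  have a: "(\<lambda>i. {i}) ` {1..n} \<noteq> zeroC n D"
  proof
    assume e: "(\<lambda>i. {i}) ` {1..n} = zeroC n D"
    have "D \<in> (\<lambda>i. {i}) ` {1..n}" by (subst e) (simp add: zeroC_def)
    then obtain i where "D = {i}" by blast
    then show False using d assms(1) by simp
  qed
  have b: "zeroC n D \<noteq> {{1..n}}"
  proof
    assume e: "zeroC n D = {{1..n}}"
    have "D \<in> zeroC n D" unfolding zeroC_def by simp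
    then have "D \<in> {{1..n}}" using e by simp
    then show False using d by simp
  qed
  show "proper_partition n (zeroC n D)"
    unfolding proper_partition_def using zeroC_part[OF assms] a b by simp
qed

lemma zeroC_inj:
  assumes "1 \<in> D" "D \<subseteq> {1..n}" "1 \<in> E" "E \<subseteq> {1..n}" "zeroC n D = zeroC n E"
  shows "D = E"
proof -
  have "D = blk (zeroC n D)" using blk_zeroC[OF assms(1,2)] by simp
  also have "\<dots> = blk (zeroC n E)" using assms(5) by simp
  also have "\<dots> = E" using blk_zeroC[OF assms(3,4)] by simp
  finally show ?thesis .
qed

lemma A_zeroC:
  assumes P: "partition_on {1..n} P" and h: "\<forall>B\<in>P. 1 \<notin> B \<longrightarrow> card B = 1"
  shows "P = zeroC n (blk P)"
proof -
  have bm: "blk P \<in> P" "1 \<in> blk P" using blk_mem[OF P one_in] by auto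
  show ?thesis
  proof
    show "P \<subseteq> zeroC n (blk P)"
    proof
      fix B assume B: "B \<in> P"
      show "B \<in> zeroC n (blk P)"
      proof (cases "B = blk P")
        case True then show ?thesis unfolding zeroC_def by simp
      next
        case False
        then have "1 \<notin> B" using part_unique[OF P B bm(1), of 1] bm by blast
        then have "card B = 1" using h B by blast
        then obtain x where x: "B = {x}" using card_1_singletonE by blast
        have "x \<in> {1..n}" using part_sub[OF P B] x by blast
        moreover have "x \<notin> blk P" using part_unique[OF P B bm(1), of x] x False by blast
        ultimately show ?thesis unfolding zeroC_def using x by blast
      qed
    qed
    show "zeroC n (blk P) \<subseteq> P"
    proof
      fix B assume B: "B \<in> zeroC n (blk P)"
      show "B \<in> P"
      proof (cases "B = blk P")
        case True then show ?thesis using bm by simp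
      next
        case False
        then obtain x where x: "x \<in> {1..n}" "x \<notin> blk P" "B = {x}" using zeroC_memE[OF B] by blast
        obtain C where C: "C \<in> P" "x \<in> C" using part_ex[OF P x(1)] by blast
        have "C \<noteq> blk P" using C x by blast
        then have "1 \<notin> C" using part_unique[OF P C(1) bm(1), of 1] bm by blast
        then have "card C = 1" using h C by blast
        then have "C = {x}" using C(2) by (metis card_1_singletonE singletonD)
        then show ?thesis using C x by simp
      qed
    qed
  qed
qed

lemma zeroC_blocks:
  assumes "B \<in> zeroC n D" "1 \<notin> B" "1 \<in> D"
  shows "card B = 1"
  using assms unfolding zeroC_def by auto

lemma zeroC_cover:
  assumes Q: "partition_on {1..n} Q" and D: "1 \<in> D" "D \<subseteq> {1..n}"
    and y: "y \<notin> D" "y \<in> {1..n}"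
    and r1: "refines (zeroC n D) Q" and r2: "refines Q (zeroC n (insert y D))"
  shows "Q = zeroC n D \<or> Q = zeroC n (insert y D)"
proof -
  have D': "1 \<in> insert y D" "insert y D \<subseteq> {1..n}" using D y by auto
  have s1: "D \<subseteq> blk Q" using r1 refines_zeroC_iff[OF Q D] by simp
  have s2: "blk Q \<subseteq> insert y D"
    using refines_blk[OF Q zeroC_part[OF D'] one_in r2] blk_zeroC[OF D'] by simp
  have bm: "blk Q \<in> Q" "1 \<in> blk Q" using blk_mem[OF Q one_in] by auto
  show ?thesis
  proof (cases "y \<in> blk Q")
    case True
    then have "blk Q = insert y D" using s1 s2 by blast
    then have "refines (zeroC n (insert y D)) Q" using refines_zeroC_iff[OF Q D'] by simp
    then show ?thesis using refines_antisym[OF Q zeroC_part[OF D'] r2] by simp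
  next
    case False
    then have bq: "blk Q = D" using s1 s2 by blast
    have "refines Q (zeroC n D)"
      unfolding refines_def
    proof
      fix B assume B: "B \<in> Q"
      show "\<exists>C\<in>zeroC n D. B \<subseteq> C"
      proof (cases "B = blk Q")
        case True then show ?thesis using bq unfolding zeroC_def by blast
      next
        case F: False
        have disj: "B \<inter> blk Q = {}"
          using Q B bm(1) F unfolding partition_on_def disjoint_def by blast
        obtain C where C: "C \<in> zeroC n (insert y D)" "B \<subseteq> C" using r2 B unfolding refines_def by blast
        have Bne: "B \<noteq> {}" using part_ne[OF Q B] .
        show ?thesis
        proof (cases "C = insert y D")
          case True
          then have "B = {y}" using C(2) disj bq Bne by blast
          then show ?thesis unfolding zeroC_def using y by blast
        next
          case False
          then obtain z where z: "z \<in> {1..n}" "z \<notin> insert y D" "C = {z}" using zeroC_memE[OF C(1)] by blast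
          then have "B = {z}" using C(2) Bne by blast
          then show ?thesis unfolding zeroC_def using z by blast
        qed
      qed
    qed
    then have "Q = zeroC n D"
      using refines_antisym[OF Q zeroC_part[OF D]] r1 by simp
    then show ?thesis by simp
  qed
qed

lemma zeroC_of_coatom:
  assumes Q: "partition_on {1..n} Q" and b: "blk Q = D" and z: "{1..n} - D = {z}"
  shows "Q = zeroC n D"
proof -
  have bm: "blk Q \<in> Q" "1 \<in> blk Q" using blk_mem[OF Q one_in] by auto
  have D: "1 \<in> D" "D \<subseteq> {1..n}" using bm b part_sub[OF Q bm(1)] by auto
  have "refines Q (zeroC n D)"
    unfolding refines_def
  proof
    fix B assume B: "B \<in> Q"
    show "\<exists>C\<in>zeroC n D. B \<subseteq> C"
    proof (cases "B = D")
      case True then show ?thesis unfolding zeroC_def by blast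
    next
      case F: False
      have disj: "B \<inter> D = {}"
        using Q B bm(1) F b unfolding partition_on_def disjoint_def by blast
      have "B \<subseteq> {z}" using part_sub[OF Q B] disj z by blast
      moreover have "{z} \<in> zeroC n D" using z unfolding zeroC_def by blast
      ultimately show ?thesis by blast
    qed
  qed
  moreover have "refines (zeroC n D) Q" using refines_zeroC_iff[OF Q D] b by simp
  ultimately show ?thesis using refines_antisym[OF Q zeroC_part[OF D]] by simp
qed

lemma alphaC_part:
  assumes "1 \<in> C" "C \<subseteq> {1..n}" "C \<noteq> {1..n}"
  shows "partition_on {1..n} (alphaC n C)"
  unfolding partition_on_def alphaC_def disjoint_def using assms by auto

lemma blk_alphaC:
  assumes "1 \<in> C"
  shows "blk (alphaC n C) = C"
  unfolding blk_def alphaC_def using assms by (intro the_equality) auto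

lemma card_alphaC: "card (alphaC n C) \<le> 2"
  unfolding alphaC_def by (simp add: card_insert_le_m1)

lemma alphaC_proper:
  assumes "1 \<in> C" "C \<subseteq> {1..n}" "C \<noteq> {1..n}"
  shows "proper_partition n (alphaC n C)"
proof -
  have a: "alphaC n C \<noteq> (\<lambda>i. {i}) ` {1..n}"
  proof
    assume "alphaC n C = (\<lambda>i. {i}) ` {1..n}"
    then have "card (alphaC n C) = n" using card_bot0 unfolding bot0_def by simp
    then show False using card_alphaC[of C] n3 by simp
  qed
  have b: "alphaC n C \<noteq> {{1..n}}"
  proof
    assume "alphaC n C = {{1..n}}"
    then have "C \<in> {{1..n}}" unfolding alphaC_def by (metis insertI1)
    then show False using assms by simp
  qed
  show ?thesis unfolding proper_partition_def using alphaC_part[OF assms] a b by simp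
qed

lemma refines_alphaC:
  assumes Q: "partition_on {1..n} Q" and b: "blk Q = C"
  shows "refines Q (alphaC n C)"
  unfolding refines_def
proof
  have bm: "blk Q \<in> Q" "1 \<in> blk Q" using blk_mem[OF Q one_in] by auto
  fix B assume B: "B \<in> Q"
  show "\<exists>Ca\<in>alphaC n C. B \<subseteq> Ca"
  proof (cases "B = C")
    case True then show ?thesis unfolding alphaC_def by blast
  next
    case F: False
    have disj: "B \<inter> C = {}"
      using Q B bm(1) F b unfolding partition_on_def disjoint_def by blast
    have "B \<subseteq> {1..n} - C" using part_sub[OF Q B] disj by blast
    then show ?thesis unfolding alphaC_def by blast
  qed
qed

lemma alphaC_eq_zeroC:
  assumes "1 \<in> C"
  shows "alphaC n C = zeroC n C \<longleftrightarrow> (\<exists>z. {1..n} - C = {z})"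
proof
  assume e: "alphaC n C = zeroC n C"
  have "{1..n} - C \<in> zeroC n C" using e unfolding alphaC_def by (metis insertCI)
  moreover have "{1..n} - C \<noteq> C" using assms by blast
  ultimately obtain x where "x \<in> {1..n} - C" "{1..n} - C = {x}" unfolding zeroC_def by blast
  then show "\<exists>z. {1..n} - C = {z}" by blast
next
  assume "\<exists>z. {1..n} - C = {z}"
  then obtain z where z: "{1..n} - C = {z}" by blast
  show "alphaC n C = zeroC n C" unfolding alphaC_def zeroC_def z by simp
qed

lemma alphaC_1: "alphaC n {1} = alpha n"
proof -
  have "{1..n} - {1} = {2..n}" by auto
  then show ?thesis unfolding alphaC_def alpha_def by simp
qed

end

context fixes n :: nat assumes n3: "3 \<le> n"
begin

lemma split_part:
  assumes P: "partition_on {1..n} P" and C: "1 \<in> C" "C \<subseteq> blk P" "C \<noteq> blk P"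
  shows "partition_on {1..n} (splitC P C)"
proof -
  have bm: "blk P \<in> P" "1 \<in> blk P" using blk_mem[OF P one_in[OF n3]] by auto
  have U: "\<Union>P = {1..n}" using P unfolding partition_on_def by simp
  have D: "disjoint P" using P unfolding partition_on_def by simp
  have E: "{} \<notin> P" using P unfolding partition_on_def by simp
  show ?thesis
    unfolding partition_on_def splitC_def
  proof (intro conjI)
    show "\<Union>(insert C (insert (blk P - C) (P - {blk P}))) = {1..n}"
    proof
      show "\<Union>(insert C (insert (blk P - C) (P - {blk P}))) \<subseteq> {1..n}"
        using U bm(1) C(2) by auto
      show "{1..n} \<subseteq> \<Union>(insert C (insert (blk P - C) (P - {blk P})))"
      proof
        fix x assume "x \<in> {1..n}"
        then obtain X where X: "X \<in> P" "x \<in> X" using U by blast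
        show "x \<in> \<Union>(insert C (insert (blk P - C) (P - {blk P})))"
        proof (cases "X = blk P")
          case True then show ?thesis using X by (cases "x \<in> C") auto
        next
          case False then show ?thesis using X by auto
        qed
      qed
    qed
    show "{} \<notin> insert C (insert (blk P - C) (P - {blk P}))"
      using E C by blast
    show "disjoint (insert C (insert (blk P - C) (P - {blk P})))"
      unfolding disjoint_def
    proof (intro ballI impI)
      fix a b assume a: "a \<in> insert C (insert (blk P - C) (P - {blk P}))"
        and b: "b \<in> insert C (insert (blk P - C) (P - {blk P}))" and ab: "a \<noteq> b"
      have d1: "X \<inter> blk P = {}" if "X \<in> P - {blk P}" for X
        using D that bm(1) unfolding disjoint_def by blast
      have d2: "X \<inter> Y = {}" if "X \<in> P - {blk P}" "Y \<in> P - {blk P}" "X \<noteq> Y" for X Y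
        using D that unfolding disjoint_def by blast
      show "a \<inter> b = {}"
        using a b ab d1 d2 C(2) by blast
    qed
  qed
qed

lemma blk_split:
  assumes P: "partition_on {1..n} P" and C: "1 \<in> C" "C \<subseteq> blk P" "C \<noteq> blk P"
  shows "blk (splitC P C) = C"
proof (rule blk_eq[OF split_part[OF P C]])
  show "C \<in> splitC P C" unfolding splitC_def by simp
  show "1 \<in> C" using C(1) .
qed

lemma split_ref:
  assumes P: "partition_on {1..n} P" and C: "C \<subseteq> blk P"
  shows "refines (splitC P C) P"
  unfolding refines_def
proof
  have bm: "blk P \<in> P" using blk_mem[OF P one_in[OF n3]] by auto
  fix X assume X: "X \<in> splitC P C"
  then have "X = C \<or> X = blk P - C \<or> X \<in> P" unfolding splitC_def by blast
  then show "\<exists>Y\<in>P. X \<subseteq> Y" using bm C by blast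
qed

lemma ref_split:
  assumes P: "partition_on {1..n} P" and Q: "partition_on {1..n} Q"
    and b: "blk Q = C" and r: "refines Q P"
  shows "refines Q (splitC P C)"
  unfolding refines_def
proof
  have bm: "blk Q \<in> Q" "1 \<in> blk Q" using blk_mem[OF Q one_in[OF n3]] by auto
  fix X assume X: "X \<in> Q"
  show "\<exists>Y\<in>splitC P C. X \<subseteq> Y"
  proof (cases "X = C")
    case True then show ?thesis unfolding splitC_def by blast
  next
    case F: False
    have disj: "X \<inter> C = {}"
      using Q X bm(1) F b unfolding partition_on_def disjoint_def by blast
    obtain Y where Y: "Y \<in> P" "X \<subseteq> Y" using r X unfolding refines_def by blast
    show ?thesis
    proof (cases "Y = blk P")
      case True
      then have "X \<subseteq> blk P - C" using Y disj by blast
      then show ?thesis unfolding splitC_def by blast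
    next
      case False
      then have "Y \<in> splitC P C" using Y unfolding splitC_def by blast
      then show ?thesis using Y by blast
    qed
  qed
qed

lemma split_eq_zeroC:
  assumes P: "partition_on {1..n} P" and C: "1 \<in> C" "C \<subseteq> blk P" "C \<noteq> blk P"
    and e: "splitC P C = zeroC n C"
  shows "\<exists>y. y \<notin> C \<and> P = zeroC n (insert y C)"
proof -
  have bm: "blk P \<in> P" "1 \<in> blk P" using blk_mem[OF P one_in[OF n3]] by auto
  have m0: "blk P - C \<in> splitC P C" unfolding splitC_def by simp
  have m: "blk P - C \<in> zeroC n C" using m0 unfolding e .
  have "blk P - C \<noteq> C" using C by blast
  then obtain y where y: "y \<in> {1..n}" "y \<notin> C" "blk P - C = {y}" using zeroC_memE[OF n3 m] by metis
  have B: "blk P = insert y C"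
  proof
    show "blk P \<subseteq> insert y C" using y(3) by auto
    show "insert y C \<subseteq> blk P" using y(3) C(2) by auto
  qed
  have h: "\<forall>X\<in>P. 1 \<notin> X \<longrightarrow> card X = 1"
  proof (intro ballI impI)
    fix X assume X: "X \<in> P" and X1: "1 \<notin> X"
    have XB: "X \<noteq> blk P" using X1 bm by blast
    then have "X \<in> splitC P C" using X unfolding splitC_def by blast
    then have "X \<in> zeroC n C" unfolding e .
    moreover have "X \<noteq> C" using X1 C by blast
    ultimately obtain x where "X = {x}" using zeroC_memE[OF n3] by blast
    then show "card X = 1" by simp
  qed
  have "P = zeroC n (blk P)" using A_zeroC[OF n3 P h] .
  then have "P = zeroC n (insert y C)" unfolding B .
  then show ?thesis using y(2) by blast
qed

lemma split_proper:
  assumes P: "partition_on {1..n} P" and C: "1 \<in> C" "C \<subseteq> blk P" "C \<noteq> blk P"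
    and nz: "\<forall>y. y \<notin> C \<longrightarrow> P \<noteq> zeroC n (insert y C)"
  shows "proper_partition n (splitC P C)"
proof -
  have a: "splitC P C \<noteq> (\<lambda>i. {i}) ` {1..n}"
  proof
    assume e: "splitC P C = (\<lambda>i. {i}) ` {1..n}"
    have "C \<in> splitC P C" unfolding splitC_def by simp
    then have "C \<in> (\<lambda>i. {i}) ` {1..n}" unfolding e .
    then obtain i where "C = {i}" by blast
    then have C1: "C = {1}" using C(1) by simp
    have "zeroC n C = (\<lambda>i. {i}) ` {1..n}" using zeroC_1[OF n3] C1 unfolding bot0_def by simp
    then have "splitC P C = zeroC n C" using e by simp
    then show False using split_eq_zeroC[OF P C] nz by blast
  qed
  have b: "splitC P C \<noteq> {{1..n}}"
  proof
    assume e: "splitC P C = {{1..n}}"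
    have "C \<in> splitC P C" "blk P - C \<in> splitC P C" unfolding splitC_def by simp_all
    then have "C \<in> {{1..n}}" "blk P - C \<in> {{1..n}}" unfolding e .
    then have "C = blk P - C" by simp
    then show False using C(1) by blast
  qed
  show ?thesis unfolding proper_partition_def using split_part[OF P C] a b by simp
qed

end

lemma act_part_comp: "act_part (g \<circ> h) P = act_part g (act_part h P)"
  unfolding act_part_def by (auto simp: image_comp)

lemma act_simp_comp: "act_simp (g \<circ> h) s = act_simp g (act_simp h s)"
  unfolding act_simp_def by (auto simp: image_comp act_part_comp)

lemma act_part_id: "act_part id P = P"
  unfolding act_part_def by simp

lemma act_simp_id: "act_simp id s = s"
  unfolding act_simp_def by (simp add: act_part_id)

lemma inj_act_part: "inj g \<Longrightarrow> inj (act_part g)"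
  unfolding act_part_def by (simp add: inj_image_eq_iff inj_on_def)

lemma inj_act_simp: "inj g \<Longrightarrow> inj (act_simp g)"
  unfolding act_simp_def using inj_act_part by (simp add: inj_image_eq_iff inj_on_def)

lemma card_act_part: "inj g \<Longrightarrow> card (act_part g P) = card P"
  unfolding act_part_def by (simp add: card_image inj_image_eq_iff inj_on_def)

lemma card_act_simp: "inj g \<Longrightarrow> card (act_simp g s) = card s"
  unfolding act_simp_def by (rule card_image, rule inj_on_subset[OF inj_act_part], auto)

lemma refines_act:
  assumes "inj g"
  shows "refines (act_part g P) (act_part g Q) \<longleftrightarrow> refines P Q"
  unfolding refines_def act_part_def using assms by (auto simp: inj_image_subset_iff)

context fixes n :: nat and g :: "nat \<Rightarrow> nat" assumes n3: "3 \<le> n" and gp: "g permutes {1..n}"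
begin

lemma g_inj: "inj g" using gp by (simp add: permutes_inj)
lemma g_img: "g ` {1..n} = {1..n}" using gp by (simp add: permutes_image)
lemma g_diff: "g ` (A - B) = g ` A - g ` B" using g_inj by (simp add: image_set_diff)

lemma act_zeroC: "act_part g (zeroC n D) = zeroC n (g ` D)"
proof -
  have "act_part g (zeroC n D) = insert (g ` D) ((\<lambda>x. {g x}) ` ({1..n} - D))"
    unfolding act_part_def zeroC_def by (simp add: image_image)
  also have "(\<lambda>x. {g x}) ` ({1..n} - D) = (\<lambda>y. {y}) ` (g ` ({1..n} - D))"
    by (simp add: image_image)
  also have "g ` ({1..n} - D) = {1..n} - g ` D" using g_diff g_img by simp
  finally show ?thesis unfolding zeroC_def .
qed

lemma act_alphaC: "act_part g (alphaC n C) = alphaC n (g ` C)"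
  unfolding act_part_def alphaC_def by (auto simp: g_diff g_img)

lemma act_bot0: "act_part g (bot0 n) = bot0 n"
proof -
  have "act_part g (bot0 n) = (\<lambda>y. {y}) ` (g ` {1..n})"
    unfolding act_part_def bot0_def by (simp add: image_image)
  then show ?thesis using g_img unfolding bot0_def by simp
qed

lemma act_top: "act_part g {{1..n}} = {{1..n}}"
  unfolding act_part_def by (simp add: g_img)

lemma act_part_partition:
  assumes P: "partition_on {1..n} P"
  shows "partition_on {1..n} (act_part g P)"
  unfolding partition_on_def
proof (intro conjI)
  have "\<Union>(act_part g P) = g ` \<Union>P" unfolding act_part_def by blast
  also have "\<Union>P = {1..n}" using P unfolding partition_on_def by simp
  finally show "\<Union>(act_part g P) = {1..n}" using g_img by simp
  show "{} \<notin> act_part g P" using partition_onD3[OF P] unfolding act_part_def by auto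
  show "disjoint (act_part g P)"
    unfolding disjoint_def
  proof (intro ballI impI)
    fix a b assume a: "a \<in> act_part g P" and b: "b \<in> act_part g P" and ab: "a \<noteq> b"
    obtain A where A: "A \<in> P" "a = g ` A" using a unfolding act_part_def by blast
    obtain B where B: "B \<in> P" "b = g ` B" using b unfolding act_part_def by blast
    have "A \<noteq> B" using A B ab by blast
    then have "A \<inter> B = {}" using P A(1) B(1) unfolding partition_on_def disjoint_def by blast
    then have "g ` A \<inter> g ` B = {}" using g_inj by (simp add: image_Int[symmetric])
    then show "a \<inter> b = {}" using A B by simp
  qed
qed

end

context fixes n :: nat and g :: "nat \<Rightarrow> nat"
  assumes n3: "3 \<le> n" and gp: "g permutes {1..n}" and g1: "g 1 = 1"
begin

definition "h = inv g"

lemma hp: "h permutes {1..n}" unfolding h_def using permutes_inv[OF gp] .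
lemma h1: "h 1 = 1" unfolding h_def using permutes_inv_eq[OF gp] g1 by simp
lemma gh: "g (h y) = y" unfolding h_def using permutes_inverses[OF gp] by simp
lemma hg: "h (g y) = y" unfolding h_def using permutes_inverses[OF gp] by simp
lemma hgo: "h \<circ> g = id" using hg by (simp add: fun_eq_iff)
lemma gho: "g \<circ> h = id" using gh by (simp add: fun_eq_iff)

lemma act_hg: "act_part h (act_part g P) = P"
  using act_part_comp[of h g P] hgo act_part_id by simp
lemma act_gh: "act_part g (act_part h P) = P"
  using act_part_comp[of g h P] gho act_part_id by simp
lemma acts_hg: "act_simp h (act_simp g s) = s"
  using act_simp_comp[of h g s] hgo act_simp_id by simp
lemma acts_gh: "act_simp g (act_simp h s) = s"
  using act_simp_comp[of g h s] gho act_simp_id by simp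

lemma part_act_iff: "partition_on {1..n} (act_part g P) \<longleftrightarrow> partition_on {1..n} P"
  using act_part_partition[OF n3 gp, of P] act_part_partition[OF n3 hp, of "act_part g P"] act_hg by auto

lemma blk_act:
  assumes P: "partition_on {1..n} P"
  shows "blk (act_part g P) = g ` blk P"
proof (rule blk_eq[OF act_part_partition[OF n3 gp P]])
  have bm: "blk P \<in> P" "1 \<in> blk P" using blk_mem[OF P one_in[OF n3]] by auto
  show "g ` blk P \<in> act_part g P" using bm unfolding act_part_def by blast
  show "1 \<in> g ` blk P" using bm g1 by (metis imageI)
qed

lemma proper_act_iff: "proper_partition n (act_part g P) \<longleftrightarrow> proper_partition n P"
proof -
  have i: "inj (act_part g)" using inj_act_part[OF g_inj[OF n3 gp]] .
  have b: "act_part g P = bot0 n \<longleftrightarrow> P = bot0 n"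
    using act_bot0[OF n3 gp] i unfolding inj_def by metis
  have t: "act_part g P = {{1..n}} \<longleftrightarrow> P = {{1..n}}"
    using act_top[OF n3 gp] i unfolding inj_def by metis
  show ?thesis unfolding proper_partition_def using part_act_iff b t unfolding bot0_def by simp
qed

lemma simplex_act_iff: "simplex n (act_simp g s) \<longleftrightarrow> simplex n s"
proof -
  have i: "inj (act_part g)" using inj_act_part[OF g_inj[OF n3 gp]] .
  have "finite (act_simp g s) \<longleftrightarrow> finite s"
    unfolding act_simp_def using i by (simp add: finite_image_iff inj_on_subset)
  moreover have "act_simp g s \<noteq> {} \<longleftrightarrow> s \<noteq> {}" unfolding act_simp_def by simp
  moreover have "(\<forall>P\<in>act_simp g s. proper_partition n P) \<longleftrightarrow> (\<forall>P\<in>s. proper_partition n P)"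
    unfolding act_simp_def using proper_act_iff by simp
  moreover have "(\<forall>P\<in>act_simp g s. \<forall>Q\<in>act_simp g s. refines P Q \<or> refines Q P) \<longleftrightarrow>
                 (\<forall>P\<in>s. \<forall>Q\<in>s. refines P Q \<or> refines Q P)"
    unfolding act_simp_def using refines_act[OF g_inj[OF n3 gp]] by simp
  ultimately show ?thesis unfolding simplex_def by blast
qed

lemma act_split:
  assumes P: "partition_on {1..n} P"
  shows "act_part g (splitC P C) = splitC (act_part g P) (g ` C)"
proof -
  have gi: "inj g" using g_inj[OF n3 gp] .
  have i: "inj (act_part g)" using inj_act_part[OF gi] .
  have "act_part g (P - {blk P}) = act_part g P - {g ` blk P}"
    unfolding act_part_def using inj_image_eq_iff[OF gi] by auto
  moreover have "g ` (blk P - C) = g ` blk P - g ` C" using gi by (simp add: image_set_diff)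
  ultimately show ?thesis
    unfolding splitC_def blk_act[OF P] by (simp add: act_part_def)
qed

lemma zeroC_in_act: "zeroC n E \<in> act_simp g s \<longleftrightarrow> zeroC n (h ` E) \<in> s"
proof
  assume "zeroC n E \<in> act_simp g s"
  then obtain Q where Q: "Q \<in> s" "zeroC n E = act_part g Q" unfolding act_simp_def by blast
  then have "act_part h (zeroC n E) = Q" using act_hg by simp
  then show "zeroC n (h ` E) \<in> s" using act_zeroC[OF n3 hp] Q(1) by simp
next
  assume a: "zeroC n (h ` E) \<in> s"
  have "act_part g (zeroC n (h ` E)) = zeroC n (g ` h ` E)" using act_zeroC[OF n3 gp] .
  also have "g ` h ` E = E" using gh by (simp add: image_image)
  finally show "zeroC n E \<in> act_simp g s" using a unfolding act_simp_def by (metis imageI)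
qed

end

definition stepC :: "nat \<Rightarrow> simplex \<Rightarrow> nat set \<Rightarrow> nat set" where
  "stepC n s D = (if \<exists>y. y \<notin> D \<and> zeroC n (insert y D) \<in> s
     then insert (SOME y. y \<notin> D \<and> zeroC n (insert y D) \<in> s) D else D)"

definition iterC :: "nat \<Rightarrow> simplex \<Rightarrow> nat \<Rightarrow> nat set" where
  "iterC n s k = (stepC n s ^^ k) {1}"

definition core :: "nat \<Rightarrow> simplex \<Rightarrow> nat set" where
  "core n s = iterC n s n"

lemma iterC_0: "iterC n s 0 = {1}" unfolding iterC_def by simp
lemma iterC_Suc: "iterC n s (Suc k) = stepC n s (iterC n s k)" unfolding iterC_def by simp

context fixes n :: nat and s :: simplex
  assumes n3: "3 \<le> n" and sx: "simplex n s"
begin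

lemma s_fin: "finite s" using sx unfolding simplex_def by simp
lemma s_prop: "P \<in> s \<Longrightarrow> proper_partition n P" using sx unfolding simplex_def by simp
lemma s_part: "P \<in> s \<Longrightarrow> partition_on {1..n} P" using s_prop unfolding proper_partition_def by simp
lemma s_chain: "P \<in> s \<Longrightarrow> Q \<in> s \<Longrightarrow> refines P Q \<or> refines Q P" using sx unfolding simplex_def by simp

lemma zero_in_sub:
  assumes "zeroC n E \<in> s" shows "E \<subseteq> {1..n}"
proof -
  have "E \<in> zeroC n E" unfolding zeroC_def by simp
  then show ?thesis using part_sub[OF s_part[OF assms]] by simp
qed

lemma zero_unique:
  assumes D: "1 \<in> D" and y: "y \<notin> D" "zeroC n (insert y D) \<in> s"
    and y': "y' \<notin> D" "zeroC n (insert y' D) \<in> s"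
  shows "y = y'"
proof -
  have d1: "1 \<in> insert y D" "insert y D \<subseteq> {1..n}" using D zero_in_sub[OF y(2)] by auto
  have d2: "1 \<in> insert y' D" "insert y' D \<subseteq> {1..n}" using D zero_in_sub[OF y'(2)] by auto
  have "refines (zeroC n (insert y D)) (zeroC n (insert y' D)) \<or> refines (zeroC n (insert y' D)) (zeroC n (insert y D))"
    using s_chain[OF y(2) y'(2)] .
  then have "insert y D \<subseteq> insert y' D \<or> insert y' D \<subseteq> insert y D"
    using refines_zeroC_iff[OF n3 zeroC_part[OF n3 d2] d1] refines_zeroC_iff[OF n3 zeroC_part[OF n3 d1] d2]
      blk_zeroC[OF n3 d1] blk_zeroC[OF n3 d2] by simp
  then show ?thesis using y y' by auto
qed

lemma step_cases:
  "stepC n s D = D \<or> (\<exists>y. y \<notin> D \<and> stepC n s D = insert y D \<and> zeroC n (insert y D) \<in> s)"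
proof (cases "\<exists>y. y \<notin> D \<and> zeroC n (insert y D) \<in> s")
  case True
  define y where "y = (SOME y. y \<notin> D \<and> zeroC n (insert y D) \<in> s)"
  have "y \<notin> D \<and> zeroC n (insert y D) \<in> s" unfolding y_def using someI_ex[OF True] .
  moreover have "stepC n s D = insert y D" unfolding stepC_def y_def using True by simp
  ultimately show ?thesis by blast
next
  case False
  have "stepC n s D = D" unfolding stepC_def by (rule if_not_P[OF False])
  then show ?thesis by simp
qed

lemma step_sub: "D \<subseteq> stepC n s D"
  unfolding stepC_def by auto

lemma step_fix_iff: "stepC n s D = D \<longleftrightarrow> \<not> (\<exists>y. y \<notin> D \<and> zeroC n (insert y D) \<in> s)"
proof
  assume e: "stepC n s D = D"
  show "\<not> (\<exists>y. y \<notin> D \<and> zeroC n (insert y D) \<in> s)"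
  proof
    assume ex: "\<exists>y. y \<notin> D \<and> zeroC n (insert y D) \<in> s"
    define y where "y = (SOME y. y \<notin> D \<and> zeroC n (insert y D) \<in> s)"
    have "y \<notin> D" unfolding y_def using someI_ex[OF ex] by blast
    moreover have "stepC n s D = insert y D" unfolding stepC_def y_def using ex by simp
    ultimately show False using e by auto
  qed
next
  assume a: "\<not> (\<exists>y. y \<notin> D \<and> zeroC n (insert y D) \<in> s)"
  show "stepC n s D = D" unfolding stepC_def by (rule if_not_P[OF a])
qed

lemma iter_props:
  "1 \<in> iterC n s k \<and> iterC n s k \<subseteq> {1..n} \<and> (iterC n s k = {1} \<or> zeroC n (iterC n s k) \<in> s)"
proof (induction k)
  case 0 then show ?case using n3 by (simp add: iterC_0)
next
  case (Suc k)
  let ?D = "iterC n s k"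
  from step_cases[of ?D] show ?case
  proof
    assume "stepC n s ?D = ?D" then show ?case using Suc by (simp add: iterC_Suc)
  next
    assume "\<exists>y. y \<notin> ?D \<and> stepC n s ?D = insert y ?D \<and> zeroC n (insert y ?D) \<in> s"
    then obtain y where y: "y \<notin> ?D" "stepC n s ?D = insert y ?D" "zeroC n (insert y ?D) \<in> s" by blast
    have "insert y ?D \<subseteq> {1..n}" using zero_in_sub[OF y(3)] .
    then show ?case using Suc y by (simp add: iterC_Suc)
  qed
qed

lemma iter_fin: "finite (iterC n s k)"
  using iter_props[of k] by (meson finite_atLeastAtMost finite_subset)

lemma iter_fix_or_card: "stepC n s (iterC n s k) = iterC n s k \<or> k + 1 \<le> card (iterC n s k)"
proof (induction k)
  case 0 then show ?case by (simp add: iterC_0)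
next
  case (Suc k)
  let ?D = "iterC n s k"
  from step_cases[of ?D] show ?case
  proof
    assume "stepC n s ?D = ?D" then show ?case by (simp add: iterC_Suc)
  next
    assume "\<exists>y. y \<notin> ?D \<and> stepC n s ?D = insert y ?D \<and> zeroC n (insert y ?D) \<in> s"
    then obtain y where y: "y \<notin> ?D" "stepC n s ?D = insert y ?D" by blast
    then have "k + 1 \<le> card ?D" using Suc by auto
    moreover have "card (iterC n s (Suc k)) = card ?D + 1"
      using y iter_fin[of k] by (simp add: iterC_Suc)
    ultimately show ?case by simp
  qed
qed

lemma core_fix: "stepC n s (core n s) = core n s"
proof -
  have "card (core n s) \<le> n" unfolding core_def using iter_props[of n] by (metis card_atLeastAtMost card_mono diff_Suc_1 finite_atLeastAtMost)
  then show ?thesis using iter_fix_or_card[of n] unfolding core_def by simp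
qed

lemma core_max: "\<not> (\<exists>y. y \<notin> core n s \<and> zeroC n (insert y (core n s)) \<in> s)"
  using core_fix step_fix_iff by blast

lemma core_props: "1 \<in> core n s" "core n s \<subseteq> {1..n}" "core n s \<noteq> {1} \<Longrightarrow> zeroC n (core n s) \<in> s"
  using iter_props[of n] unfolding core_def by auto

lemma core_fin: "finite (core n s)" unfolding core_def using iter_fin .

end

lemma one_iter: "1 \<in> iterC n s k"
proof (induction k)
  case 0 then show ?case by (simp add: iterC_0)
next
  case (Suc k) then show ?case unfolding iterC_Suc stepC_def by auto
qed

lemma step_cong:
  assumes "\<forall>E. 1 \<in> E \<longrightarrow> (zeroC n E \<in> s \<longleftrightarrow> zeroC n E \<in> s')" "1 \<in> D"
  shows "stepC n s D = stepC n s' D"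
proof -
  have i: "\<And>y. zeroC n (insert y D) \<in> s \<longleftrightarrow> zeroC n (insert y D) \<in> s'" using assms by simp
  have "(\<lambda>y. y \<notin> D \<and> zeroC n (insert y D) \<in> s) = (\<lambda>y. y \<notin> D \<and> zeroC n (insert y D) \<in> s')"
    using i by (simp add: fun_eq_iff)
  then show ?thesis unfolding stepC_def by (simp only:)
qed

lemma core_cong:
  assumes "\<forall>E. 1 \<in> E \<longrightarrow> (zeroC n E \<in> s \<longleftrightarrow> zeroC n E \<in> s')"
  shows "core n s = core n s'"
proof -
  have "iterC n s k = iterC n s' k" for k
  proof (induction k)
    case 0 then show ?case by (simp add: iterC_0)
  next
    case (Suc k) then show ?case
      using step_cong[OF assms one_iter[of n s k]] by (simp add: iterC_Suc)
  qed
  then show ?thesis unfolding core_def by simp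
qed

context fixes n :: nat and s :: simplex
  assumes n3: "3 \<le> n" and sx: "simplex n s"
begin

lemma iter_inv:
  "\<forall>Q\<in>s. (\<exists>E. 1 \<in> E \<and> E \<subseteq> iterC n s k \<and> Q = zeroC n E)
          \<or> (refines (zeroC n (iterC n s k)) Q \<and> zeroC n (iterC n s k) \<noteq> Q)"
proof (induction k)
  case 0
  show ?case
  proof
    fix Q assume Q: "Q \<in> s"
    have P: "partition_on {1..n} Q" using s_part[OF n3 sx Q] .
    have "{1} \<subseteq> blk Q" using blk_mem[OF P one_in[OF n3]] by simp
    then have "refines (zeroC n {1}) Q" using refines_zeroC_iff[OF n3 P, of "{1}"] n3 by simp
    moreover have "zeroC n {1} \<noteq> Q"
      using s_prop[OF n3 sx Q] zeroC_1[OF n3] unfolding proper_partition_def bot0_def by auto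
    ultimately show "(\<exists>E. 1 \<in> E \<and> E \<subseteq> iterC n s 0 \<and> Q = zeroC n E)
          \<or> (refines (zeroC n (iterC n s 0)) Q \<and> zeroC n (iterC n s 0) \<noteq> Q)"
      by (simp add: iterC_0)
  qed
next
  case (Suc k)
  let ?D = "iterC n s k"
  have Dp: "1 \<in> ?D" "?D \<subseteq> {1..n}" using iter_props[OF n3 sx, of k] by auto
  from step_cases[OF n3 sx, of ?D] show ?case
  proof
    assume "stepC n s ?D = ?D" then show ?case using Suc by (simp add: iterC_Suc)
  next
    assume "\<exists>y. y \<notin> ?D \<and> stepC n s ?D = insert y ?D \<and> zeroC n (insert y ?D) \<in> s"
    then obtain y where y: "y \<notin> ?D" "stepC n s ?D = insert y ?D" "zeroC n (insert y ?D) \<in> s" by blast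
    have yn: "y \<in> {1..n}" using zero_in_sub[OF n3 sx y(3)] by simp
    have it: "iterC n s (Suc k) = insert y ?D" using y(2) by (simp add: iterC_Suc)
    show ?case unfolding it
    proof
      fix Q assume Q: "Q \<in> s"
      have P: "partition_on {1..n} Q" using s_part[OF n3 sx Q] .
      from Suc[rule_format, OF Q] show "(\<exists>E. 1 \<in> E \<and> E \<subseteq> insert y ?D \<and> Q = zeroC n E)
          \<or> (refines (zeroC n (insert y ?D)) Q \<and> zeroC n (insert y ?D) \<noteq> Q)"
      proof
        assume "\<exists>E. 1 \<in> E \<and> E \<subseteq> ?D \<and> Q = zeroC n E"
        then show ?thesis by blast
      next
        assume a: "refines (zeroC n ?D) Q \<and> zeroC n ?D \<noteq> Q"
        from s_chain[OF n3 sx Q y(3)] show ?thesis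
        proof
          assume r: "refines Q (zeroC n (insert y ?D))"
          have "Q = zeroC n ?D \<or> Q = zeroC n (insert y ?D)"
            using zeroC_cover[OF n3 P Dp y(1) yn] a r by blast
          then have "Q = zeroC n (insert y ?D)" using a by metis
          then show ?thesis using Dp by blast
        next
          assume r: "refines (zeroC n (insert y ?D)) Q"
          show ?thesis
          proof (cases "zeroC n (insert y ?D) = Q")
            case True then show ?thesis using Dp by blast
          next
            case False then show ?thesis using r by blast
          qed
        qed
      qed
    qed
  qed
qed

lemma core_inv:
  "Q \<in> s \<Longrightarrow> (\<exists>E. 1 \<in> E \<and> E \<subseteq> core n s \<and> Q = zeroC n E)
          \<or> (refines (zeroC n (core n s)) Q \<and> zeroC n (core n s) \<noteq> Q)"
  using iter_inv[of n] unfolding core_def by blast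

lemma iter_sat:
  "\<forall>m. 2 \<le> m \<and> m \<le> card (iterC n s k) \<longrightarrow>
     (\<exists>E. card E = m \<and> 1 \<in> E \<and> E \<subseteq> iterC n s k \<and> zeroC n E \<in> s)"
proof (induction k)
  case 0 then show ?case by (auto simp: iterC_0)
next
  case (Suc k)
  let ?D = "iterC n s k"
  have Dp: "1 \<in> ?D" "?D \<subseteq> {1..n}" using iter_props[OF n3 sx, of k] by auto
  from step_cases[OF n3 sx, of ?D] show ?case
  proof
    assume "stepC n s ?D = ?D" then show ?case using Suc by (simp add: iterC_Suc)
  next
    assume "\<exists>y. y \<notin> ?D \<and> stepC n s ?D = insert y ?D \<and> zeroC n (insert y ?D) \<in> s"
    then obtain y where y: "y \<notin> ?D" "stepC n s ?D = insert y ?D" "zeroC n (insert y ?D) \<in> s" by blast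
    have it: "iterC n s (Suc k) = insert y ?D" using y(2) by (simp add: iterC_Suc)
    have cd: "card (insert y ?D) = card ?D + 1" using y(1) iter_fin[OF n3 sx, of k] by simp
    show ?case unfolding it
    proof (intro allI impI)
      fix m assume m: "2 \<le> m \<and> m \<le> card (insert y ?D)"
      show "\<exists>E. card E = m \<and> 1 \<in> E \<and> E \<subseteq> insert y ?D \<and> zeroC n E \<in> s"
      proof (cases "m \<le> card ?D")
        case True
        then obtain E where "card E = m" "1 \<in> E" "E \<subseteq> ?D" "zeroC n E \<in> s" using Suc m by blast
        then show ?thesis by blast
      next
        case False
        then have "m = card (insert y ?D)" using m cd by simp
        then show ?thesis using y(3) Dp by blast
      qed
    qed
  qed
qed

lemma core_sat:
  "2 \<le> m \<Longrightarrow> m \<le> card (core n s) \<Longrightarrow>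
     \<exists>E. card E = m \<and> 1 \<in> E \<and> E \<subseteq> core n s \<and> zeroC n E \<in> s"
  using iter_sat[of n] unfolding core_def by blast

end

lemma core_mono:
  assumes n3: "3 \<le> n" and sx: "simplex n s" and sx': "simplex n s'" and sub: "s \<subseteq> s'"
  shows "core n s \<subseteq> core n s'"
proof -
  have "iterC n s k = iterC n s' k \<or> (stepC n s (iterC n s k) = iterC n s k \<and> iterC n s k \<subseteq> iterC n s' k)" for k
  proof (induction k)
    case 0 then show ?case by (simp add: iterC_0)
  next
    case (Suc k)
    let ?D = "iterC n s k" and ?D' = "iterC n s' k"
    have Dp: "1 \<in> ?D" using one_iter .
    from Suc show ?case
    proof
      assume eq: "?D = ?D'"
      from step_cases[OF n3 sx, of ?D] show ?case
      proof
        assume f: "stepC n s ?D = ?D"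
        have "?D' \<subseteq> stepC n s' ?D'" using step_sub[OF n3 sx'] .
        then show ?case using f eq by (simp add: iterC_Suc)
      next
        assume "\<exists>y. y \<notin> ?D \<and> stepC n s ?D = insert y ?D \<and> zeroC n (insert y ?D) \<in> s"
        then obtain y where y: "y \<notin> ?D" "stepC n s ?D = insert y ?D" "zeroC n (insert y ?D) \<in> s" by blast
        have y's: "zeroC n (insert y ?D) \<in> s'" using y(3) sub by blast
        from step_cases[OF n3 sx', of ?D] show ?case
        proof
          assume "stepC n s' ?D = ?D"
          then show ?case using step_fix_iff[OF n3 sx', of ?D] y(1) y's by blast
        next
          assume "\<exists>y. y \<notin> ?D \<and> stepC n s' ?D = insert y ?D \<and> zeroC n (insert y ?D) \<in> s'"
          then obtain y' where y': "y' \<notin> ?D" "stepC n s' ?D = insert y' ?D" "zeroC n (insert y' ?D) \<in> s'" by blast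
          have "y = y'" using zero_unique[OF n3 sx' Dp y(1) y's y'(1,3)] .
          then show ?case using y(2) y'(2) eq by (simp add: iterC_Suc)
        qed
      qed
    next
      assume a: "stepC n s ?D = ?D \<and> ?D \<subseteq> ?D'"
      have "?D' \<subseteq> stepC n s' ?D'" using step_sub[OF n3 sx'] .
      then have "?D \<subseteq> stepC n s' ?D'" using a by (meson order_trans)
      then have "?D \<subseteq> iterC n s' (Suc k)" by (simp add: iterC_Suc)
      moreover have "iterC n s (Suc k) = ?D" using a by (simp add: iterC_Suc)
      ultimately show ?case using a by simp
    qed
  qed
  then show ?thesis unfolding core_def by blast
qed

context fixes n :: nat and g :: "nat \<Rightarrow> nat" and s :: simplex
  assumes n3: "3 \<le> n" and gp: "g permutes {1..n}" and g1: "g 1 = 1" and sx: "simplex n s"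
begin

lemma step_act:
  assumes D: "1 \<in> D"
  shows "stepC n (act_simp g s) (g ` D) = g ` stepC n s D"
proof -
  have hgD: "h g ` g ` D = D" using hg[OF n3 gp g1] by (simp add: image_image)
  have m: "zeroC n (insert y (g ` D)) \<in> act_simp g s \<longleftrightarrow> zeroC n (insert (h g y) D) \<in> s" for y
    using zeroC_in_act[OF n3 gp g1, of "insert y (g ` D)" s] hgD by simp
  have nm: "y \<notin> g ` D \<longleftrightarrow> h g y \<notin> D" for y
    using hg[OF n3 gp g1] gh[OF n3 gp g1] by (metis image_iff)
  have c: "(\<exists>y. y \<notin> g ` D \<and> zeroC n (insert y (g ` D)) \<in> act_simp g s) \<longleftrightarrow>
           (\<exists>y. y \<notin> D \<and> zeroC n (insert y D) \<in> s)"
  proof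
    assume "\<exists>y. y \<notin> g ` D \<and> zeroC n (insert y (g ` D)) \<in> act_simp g s"
    then obtain y where "y \<notin> g ` D" "zeroC n (insert y (g ` D)) \<in> act_simp g s" by blast
    then show "\<exists>y. y \<notin> D \<and> zeroC n (insert y D) \<in> s" using m nm by blast
  next
    assume "\<exists>y. y \<notin> D \<and> zeroC n (insert y D) \<in> s"
    then obtain y where y: "y \<notin> D" "zeroC n (insert y D) \<in> s" by blast
    have "h g (g y) = y" using hg[OF n3 gp g1] .
    then show "\<exists>y. y \<notin> g ` D \<and> zeroC n (insert y (g ` D)) \<in> act_simp g s" using m nm y
      by (metis)
  qed
  show ?thesis
  proof (cases "\<exists>y. y \<notin> D \<and> zeroC n (insert y D) \<in> s")
    case True
    define y0 where "y0 = (SOME y. y \<notin> D \<and> zeroC n (insert y D) \<in> s)"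
    have y0: "y0 \<notin> D" "zeroC n (insert y0 D) \<in> s" unfolding y0_def using someI_ex[OF True] by blast+
    have T2: "\<exists>y. y \<notin> g ` D \<and> zeroC n (insert y (g ` D)) \<in> act_simp g s" using c True by blast
    define y1 where "y1 = (SOME y. y \<notin> g ` D \<and> zeroC n (insert y (g ` D)) \<in> act_simp g s)"
    have y1: "y1 \<notin> g ` D" "zeroC n (insert y1 (g ` D)) \<in> act_simp g s" unfolding y1_def using someI_ex[OF T2] by blast+
    have "h g y1 \<notin> D" "zeroC n (insert (h g y1) D) \<in> s" using y1 m nm by blast+
    then have "h g y1 = y0" using zero_unique[OF n3 sx D _ _ y0] by blast
    then have y1e: "y1 = g y0" using gh[OF n3 gp g1] by metis
    have "stepC n (act_simp g s) (g ` D) = insert y1 (g ` D)" unfolding stepC_def y1_def using T2 by simp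
    moreover have "stepC n s D = insert y0 D" unfolding stepC_def y0_def using True by simp
    ultimately show ?thesis using y1e by simp
  next
    case False
    then have F2: "\<not> (\<exists>y. y \<notin> g ` D \<and> zeroC n (insert y (g ` D)) \<in> act_simp g s)" using c by blast
    have "stepC n (act_simp g s) (g ` D) = g ` D" unfolding stepC_def by (rule if_not_P[OF F2])
    moreover have "stepC n s D = D" unfolding stepC_def by (rule if_not_P[OF False])
    ultimately show ?thesis by simp
  qed
qed

lemma core_act: "core n (act_simp g s) = g ` core n s"
proof -
  have "iterC n (act_simp g s) k = g ` iterC n s k" for k
  proof (induction k)
    case 0 then show ?case using g1 by (simp add: iterC_0)
  next
    case (Suc k) then show ?case using step_act[OF one_iter[of n s k]] by (simp add: iterC_Suc)
  qed
  then show ?thesis unfolding core_def by simp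
qed

end

definition Uset :: "nat \<Rightarrow> simplex \<Rightarrow> partition set" where
  "Uset n s = {Q \<in> s. \<not> blk Q \<subseteq> core n s}"

definition minU :: "nat \<Rightarrow> simplex \<Rightarrow> partition" where
  "minU n s = (SOME Q. Q \<in> Uset n s \<and> (\<forall>Q'\<in>Uset n s. refines Q Q'))"

definition vv :: "nat \<Rightarrow> simplex \<Rightarrow> partition" where
  "vv n s = (if Uset n s \<noteq> {} then splitC (minU n s) (core n s) else alphaC n (core n s))"

lemma minU_cong: "Uset n s = Uset n s' \<Longrightarrow> minU n s = minU n s'"
  unfolding minU_def by simp

lemma vv_cong: "Uset n s = Uset n s' \<Longrightarrow> core n s = core n s' \<Longrightarrow> vv n s = vv n s'"
proof -
  assume a: "Uset n s = Uset n s'" and b: "core n s = core n s'"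
  have "minU n s = minU n s'" using minU_cong[OF a] .
  then show ?thesis unfolding vv_def using a b by simp
qed

context fixes n :: nat and s :: simplex
  assumes n3: "3 \<le> n" and sx: "simplex n s"
begin

abbreviation "C \<equiv> core n s"

lemma U_props:
  assumes Q: "Q \<in> Uset n s"
  shows "C \<subseteq> blk Q" "C \<noteq> blk Q" "refines (zeroC n C) Q"
proof -
  have Qs: "Q \<in> s" and nb: "\<not> blk Q \<subseteq> C" using Q unfolding Uset_def by auto
  have P: "partition_on {1..n} Q" using s_part[OF n3 sx Qs] .
  from core_inv[OF n3 sx Qs] have r: "refines (zeroC n C) Q"
  proof
    assume "\<exists>E. 1 \<in> E \<and> E \<subseteq> C \<and> Q = zeroC n E"
    then obtain E where E: "1 \<in> E" "E \<subseteq> C" "Q = zeroC n E" by blast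
    have "E \<subseteq> {1..n}" using E(2) core_props(2)[OF n3 sx] by blast
    then have "blk Q = E" using blk_zeroC[OF n3 E(1)] E(3) by simp
    then show ?thesis using nb E(2) by simp
  qed simp
  then show "refines (zeroC n C) Q" .
  show "C \<subseteq> blk Q" using r refines_zeroC_iff[OF n3 P core_props(1,2)[OF n3 sx]] by simp
  then show "C \<noteq> blk Q" using nb by blast
qed

lemma minU_props:
  assumes ne: "Uset n s \<noteq> {}"
  shows "minU n s \<in> Uset n s" "\<And>Q'. Q' \<in> Uset n s \<Longrightarrow> refines (minU n s) Q'"
proof -
  have fin: "finite (Uset n s)" using s_fin[OF n3 sx] unfolding Uset_def by simp
  define mx where "mx = Max (card ` Uset n s)"
  have "mx \<in> card ` Uset n s" unfolding mx_def using fin ne by (intro Max_in) auto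
  then obtain Q where Q1: "Q \<in> Uset n s" "card Q = mx" by blast
  have "\<forall>Q'\<in>Uset n s. card Q' \<le> card Q"
    using Q1 fin unfolding mx_def by (auto intro: Max_ge)
  note Q = Q1(1) this
  have Qs: "Q \<in> s" using Q(1) unfolding Uset_def by simp
  have m: "\<forall>Q'\<in>Uset n s. refines Q Q'"
  proof
    fix Q' assume Q': "Q' \<in> Uset n s"
    have Q's: "Q' \<in> s" using Q' unfolding Uset_def by simp
    from s_chain[OF n3 sx Qs Q's] show "refines Q Q'"
    proof
      assume "refines Q' Q"
      show "refines Q Q'"
      proof (cases "Q' = Q")
        case True then show ?thesis using refines_refl by simp
      next
        case False
        have "card Q < card Q'"
          using refines_card_less[OF s_part[OF n3 sx Q's] s_part[OF n3 sx Qs] \<open>refines Q' Q\<close> _ False] by simp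
        then show ?thesis using Q(2) Q' by fastforce
      qed
    qed simp
  qed
  have ex: "\<exists>Q. Q \<in> Uset n s \<and> (\<forall>Q'\<in>Uset n s. refines Q Q')" using Q(1) m by blast
  have "minU n s \<in> Uset n s \<and> (\<forall>Q'\<in>Uset n s. refines (minU n s) Q')"
    unfolding minU_def using someI_ex[OF ex] .
  then show "minU n s \<in> Uset n s" "\<And>Q'. Q' \<in> Uset n s \<Longrightarrow> refines (minU n s) Q'" by auto
qed

lemma minU_unique:
  assumes P: "P \<in> Uset n s" "\<forall>Q'\<in>Uset n s. refines P Q'"
  shows "minU n s = P"
proof -
  have ne: "Uset n s \<noteq> {}" using P by blast
  have a: "refines (minU n s) P" using minU_props(2)[OF ne P(1)] .
  have b: "refines P (minU n s)" using P(2) minU_props(1)[OF ne] by blast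
  have p1: "partition_on {1..n} (minU n s)" using minU_props(1)[OF ne] s_part[OF n3 sx] unfolding Uset_def by blast
  have p2: "partition_on {1..n} P" using P(1) s_part[OF n3 sx] unfolding Uset_def by blast
  show ?thesis using refines_antisym[OF p1 p2 a b] .
qed

lemma C_ne_top: "C \<noteq> {1..n}"
proof (cases "C = {1}")
  case True
  show ?thesis
  proof
    assume "C = {1..n}"
    then have "n \<in> C" using n3 by simp
    then show False using True n3 by simp
  qed
next
  case False
  have "zeroC n C \<in> s" using core_props(3)[OF n3 sx False] .
  then have "proper_partition n (zeroC n C)" using s_prop[OF n3 sx] by blast
  then show ?thesis using zeroC_proper[OF n3 core_props(1,2)[OF n3 sx]] by simp
qed

lemma minU_part:
  assumes ne: "Uset n s \<noteq> {}"
  shows "partition_on {1..n} (minU n s)" "minU n s \<in> s"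
  using minU_props(1)[OF ne] s_part[OF n3 sx] unfolding Uset_def by blast+

lemma vv_blk: "blk (vv n s) = C"
proof (cases "Uset n s \<noteq> {}")
  case True
  have u: "minU n s \<in> Uset n s" using minU_props(1)[OF True] .
  show ?thesis unfolding vv_def using True
    blk_split[OF n3 minU_part(1)[OF True] core_props(1)[OF n3 sx] U_props(1,2)[OF u]] by simp
next
  case False then show ?thesis unfolding vv_def using blk_alphaC[OF n3 core_props(1)[OF n3 sx]] by simp
qed

lemma vv_part: "partition_on {1..n} (vv n s) \<and> proper_partition n (vv n s)"
proof (cases "Uset n s \<noteq> {}")
  case True
  have u: "minU n s \<in> Uset n s" using minU_props(1)[OF True] .
  have nz: "\<forall>y. y \<notin> C \<longrightarrow> minU n s \<noteq> zeroC n (insert y C)"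
    using core_max[OF n3 sx] minU_part(2)[OF True] by metis
  show ?thesis unfolding vv_def using True
    split_proper[OF n3 minU_part(1)[OF True] core_props(1)[OF n3 sx] U_props(1,2)[OF u] nz]
    unfolding proper_partition_def by simp
next
  case False then show ?thesis unfolding vv_def
    using alphaC_proper[OF n3 core_props(1,2)[OF n3 sx] C_ne_top] unfolding proper_partition_def by simp
qed

lemma vv_comparable:
  assumes Q: "Q \<in> s"
  shows "refines Q (vv n s) \<or> refines (vv n s) Q"
proof -
  have P: "partition_on {1..n} Q" using s_part[OF n3 sx Q] .
  have vp: "partition_on {1..n} (vv n s)" using vv_part by simp
  have r0: "refines (zeroC n C) (vv n s)"
    using refines_zeroC_iff[OF n3 vp core_props(1,2)[OF n3 sx]] vv_blk by simp
  from core_inv[OF n3 sx Q] show ?thesis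
  proof
    assume "\<exists>E. 1 \<in> E \<and> E \<subseteq> C \<and> Q = zeroC n E"
    then obtain E where E: "1 \<in> E" "E \<subseteq> C" "Q = zeroC n E" by blast
    have "E \<subseteq> {1..n}" using E(2) core_props(2)[OF n3 sx] by blast
    then have "refines Q (vv n s)" using refines_zeroC_iff[OF n3 vp E(1)] vv_blk E by simp
    then show ?thesis by simp
  next
    assume a: "refines (zeroC n C) Q \<and> zeroC n C \<noteq> Q"
    then have CQ: "C \<subseteq> blk Q" using refines_zeroC_iff[OF n3 P core_props(1,2)[OF n3 sx]] by simp
    show ?thesis
    proof (cases "Uset n s \<noteq> {}")
      case ne: True
      have u: "minU n s \<in> Uset n s" using minU_props(1)[OF ne] .
      have mp: "partition_on {1..n} (minU n s)" using minU_part(1)[OF ne] .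
      have v: "vv n s = splitC (minU n s) C" unfolding vv_def using ne by simp
      show ?thesis
      proof (cases "Q \<in> Uset n s")
        case True
        have r1: "refines (minU n s) Q" using minU_props(2)[OF ne True] .
        have r2: "refines (splitC (minU n s) C) (minU n s)" using split_ref[OF n3 mp U_props(1)[OF u]] .
        have "refines (vv n s) Q" using refines_trans[OF r2 r1] v by simp
        then show ?thesis by simp
      next
        case False
        have bQ: "blk Q = C"
        proof -
          have "blk Q \<subseteq> C" using False Q unfolding Uset_def by simp
          then show ?thesis using CQ by simp
        qed
        from s_chain[OF n3 sx Q minU_part(2)[OF ne]] show ?thesis
        proof
          assume "refines Q (minU n s)"
          then have "refines Q (splitC (minU n s) C)"
            using ref_split[OF n3 mp P bQ] by simp
          then show ?thesis using v by simp
        next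
          assume "refines (minU n s) Q"
          then have "blk (minU n s) \<subseteq> blk Q"
            using refines_blk[OF mp P one_in[OF n3]] by simp
          moreover have "\<not> blk (minU n s) \<subseteq> C" using u unfolding Uset_def by simp
          ultimately show ?thesis using bQ by simp
        qed
      qed
    next
      case False
      then have "blk Q \<subseteq> C" using Q unfolding Uset_def by simp
      then have "blk Q = C" using CQ by simp
      then have "refines Q (alphaC n C)" using refines_alphaC[OF n3 P] by simp
      then show ?thesis unfolding vv_def using False by simp
    qed
  qed
qed

lemma insert_vv_simplex: "simplex n (insert (vv n s) s)"
  unfolding simplex_def
proof (intro conjI ballI)
  show "insert (vv n s) s \<noteq> {}" by simp
  show "finite (insert (vv n s) s)" using s_fin[OF n3 sx] by simp
  fix P assume P: "P \<in> insert (vv n s) s"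
  then show "proper_partition n P" using vv_part s_prop[OF n3 sx] by blast
  fix Q assume Q: "Q \<in> insert (vv n s) s"
  show "refines P Q \<or> refines Q P"
  proof (cases "P = vv n s")
    case True
    then show ?thesis using Q vv_comparable refines_refl by blast
  next
    case F: False
    then have Ps: "P \<in> s" using P by blast
    show ?thesis
    proof (cases "Q = vv n s")
      case True then show ?thesis using Ps vv_comparable by blast
    next
      case False then show ?thesis using Q Ps s_chain[OF n3 sx] by blast
    qed
  qed
qed

end

lemma stab:
  assumes n3: "3 \<le> n" and sx: "simplex n s" and xp: "partition_on {1..n} x"
    and xb: "blk x = core n s" and xz: "x \<noteq> zeroC n (core n s)"
  shows "core n (insert x s) = core n s" "core n (s - {x}) = core n s"
    "vv n (insert x s) = vv n s" "vv n (s - {x}) = vv n s"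
proof -
  have nz: "\<forall>E. 1 \<in> E \<longrightarrow> x \<noteq> zeroC n E"
  proof (intro allI impI notI)
    fix E assume E: "1 \<in> E" and e: "x = zeroC n E"
    have "E \<in> x" using e unfolding zeroC_def by simp
    then have "E \<subseteq> {1..n}" using part_sub[OF xp] by blast
    then have "blk x = E" using blk_zeroC[OF n3 E] e by simp
    then show False using xb xz e by simp
  qed
  have c1: "core n (insert x s) = core n s" by (rule core_cong) (use nz in auto)
  have c2: "core n (s - {x}) = core n s" by (rule core_cong) (use nz in auto)
  show "core n (insert x s) = core n s" "core n (s - {x}) = core n s" using c1 c2 by auto
  have u1: "Uset n (insert x s) = Uset n s" unfolding Uset_def c1 using xb by auto
  have u2: "Uset n (s - {x}) = Uset n s" unfolding Uset_def c2 using xb by auto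
  show "vv n (insert x s) = vv n s" using vv_cong[OF u1 c1] .
  show "vv n (s - {x}) = vv n s" using vv_cong[OF u2 c2] .
qed

context fixes n :: nat and g :: "nat \<Rightarrow> nat" and s :: simplex
  assumes n3: "3 \<le> n" and gp: "g permutes {1..n}" and g1: "g 1 = 1" and sx: "simplex n s"
begin

lemma gsx: "simplex n (act_simp g s)" using simplex_act_iff[OF n3 gp g1] sx by simp

lemma Uset_act: "Uset n (act_simp g s) = act_part g ` Uset n s"
proof -
  have gi: "inj g" using g_inj[OF n3 gp] .
  have ca: "core n (act_simp g s) = g ` core n s" using core_act[OF n3 gp g1 sx] .
  have "\<not> blk (act_part g Q) \<subseteq> g ` core n s \<longleftrightarrow> \<not> blk Q \<subseteq> core n s" if "Q \<in> s" for Q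
    using blk_act[OF n3 gp g1 s_part[OF n3 sx that]] gi by (simp add: inj_image_subset_iff)
  note iff = this
  have "{Q \<in> act_simp g s. \<not> blk Q \<subseteq> g ` core n s} = act_part g ` {Q \<in> s. \<not> blk Q \<subseteq> core n s}"
  proof (rule set_eqI)
    fix x
    show "x \<in> {Q \<in> act_simp g s. \<not> blk Q \<subseteq> g ` core n s} \<longleftrightarrow> x \<in> act_part g ` {Q \<in> s. \<not> blk Q \<subseteq> core n s}"
    proof
      assume "x \<in> {Q \<in> act_simp g s. \<not> blk Q \<subseteq> g ` core n s}"
      then obtain Q where Q: "Q \<in> s" "x = act_part g Q" "\<not> blk (act_part g Q) \<subseteq> g ` core n s"
        unfolding act_simp_def by blast
      then have "\<not> blk Q \<subseteq> core n s" using iff by simp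
      then show "x \<in> act_part g ` {Q \<in> s. \<not> blk Q \<subseteq> core n s}" using Q by blast
    next
      assume "x \<in> act_part g ` {Q \<in> s. \<not> blk Q \<subseteq> core n s}"
      then obtain Q where Q: "Q \<in> s" "x = act_part g Q" "\<not> blk Q \<subseteq> core n s" by blast
      then have "\<not> blk (act_part g Q) \<subseteq> g ` core n s" using iff by simp
      then show "x \<in> {Q \<in> act_simp g s. \<not> blk Q \<subseteq> g ` core n s}" using Q unfolding act_simp_def by blast
    qed
  qed
  then show ?thesis unfolding Uset_def ca by simp
qed

lemma minU_act:
  assumes ne: "Uset n s \<noteq> {}"
  shows "minU n (act_simp g s) = act_part g (minU n s)"
proof (rule minU_unique[OF n3 gsx])
  show "act_part g (minU n s) \<in> Uset n (act_simp g s)" using Uset_act minU_props(1)[OF n3 sx ne] by simp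
  show "\<forall>Q'\<in>Uset n (act_simp g s). refines (act_part g (minU n s)) Q'"
    using Uset_act minU_props(2)[OF n3 sx ne] refines_act[OF g_inj[OF n3 gp]] by auto
qed

lemma vv_act: "vv n (act_simp g s) = act_part g (vv n s)"
proof (cases "Uset n s \<noteq> {}")
  case True
  have ne: "Uset n (act_simp g s) \<noteq> {}" using True Uset_act by simp
  show ?thesis unfolding vv_def using True ne minU_act[OF True] core_act[OF n3 gp g1 sx]
      act_split[OF n3 gp g1 minU_part(1)[OF n3 sx True]] by simp
next
  case False
  have ne: "Uset n (act_simp g s) = {}" using False Uset_act by simp
  show ?thesis unfolding vv_def using False ne core_act[OF n3 gp g1 sx] act_alphaC[OF n3 gp] by simp
qed

end

definition lower :: "nat \<Rightarrow> simplex \<Rightarrow> bool" where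
  "lower n s \<longleftrightarrow> simplex n s \<and> vv n s \<notin> s \<and> simplex n (insert (vv n s) s)
      \<and> vv n (insert (vv n s) s) = vv n s"

definition upper :: "nat \<Rightarrow> simplex \<Rightarrow> bool" where
  "upper n r \<longleftrightarrow> (\<exists>s. lower n s \<and> r = insert (vv n s) s)"

definition crit :: "nat \<Rightarrow> simplex \<Rightarrow> bool" where
  "crit n s \<longleftrightarrow> s \<in> C_simp n \<or> s = {alpha n}"

lemma part_card_le:
  assumes n3: "3 \<le> n" and P: "partition_on {1..n} P"
  shows "card P \<le> n"
proof -
  have "refines (zeroC n {1}) P"
    using refines_zeroC_iff[OF n3 P, of "{1}"] blk_mem[OF P one_in[OF n3]] n3 by simp
  then have "card P \<le> card (zeroC n {1})"
    using refines_card_le[OF zeroC_part[OF n3, of "{1}"] P] n3 by simp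
  then show ?thesis using zeroC_1[OF n3] card_bot0[OF n3] by simp
qed

context fixes n :: nat and s :: simplex
  assumes n3: "3 \<le> n" and sx: "simplex n s"
begin

lemma vnz: "vv n s \<notin> s \<Longrightarrow> vv n s \<noteq> zeroC n (core n s)"
proof
  assume a: "vv n s \<notin> s" and e: "vv n s = zeroC n (core n s)"
  show False
  proof (cases "core n s = {1}")
    case True
    have "vv n s = bot0 n" using e True zeroC_1[OF n3] by simp
    then show False using vv_part[OF n3 sx] unfolding proper_partition_def bot0_def by simp
  next
    case False
    then show False using core_props(3)[OF n3 sx False] a e by simp
  qed
qed

lemma lower_iff: "lower n s \<longleftrightarrow> vv n s \<notin> s"
proof
  assume "lower n s" then show "vv n s \<notin> s" unfolding lower_def by simp
next
  assume a: "vv n s \<notin> s"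
  have "vv n (insert (vv n s) s) = vv n s"
    using stab(3)[OF n3 sx conjunct1[OF vv_part[OF n3 sx]] vv_blk[OF n3 sx] vnz[OF a]] .
  then show "lower n s" unfolding lower_def using sx a insert_vv_simplex[OF n3 sx] by simp
qed

lemma U_insert_vv: "vv n s \<notin> s \<Longrightarrow> Uset n (insert (vv n s) s) = Uset n s \<and> core n (insert (vv n s) s) = core n s"
proof -
  assume a: "vv n s \<notin> s"
  have c: "core n (insert (vv n s) s) = core n s"
    using stab(1)[OF n3 sx conjunct1[OF vv_part[OF n3 sx]] vv_blk[OF n3 sx] vnz[OF a]] .
  have "Uset n (insert (vv n s) s) = Uset n s" unfolding Uset_def c using vv_blk[OF n3 sx] by auto
  then show ?thesis using c by simp
qed

lemma zero_type_card:
  assumes Q: "Q \<in> s" and z: "Q = zeroC n (blk Q)"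
  shows "2 \<le> card (blk Q) \<and> card (blk Q) \<le> n - 1"
proof -
  have P: "partition_on {1..n} Q" using s_part[OF n3 sx Q] .
  have bm: "blk Q \<in> Q" "1 \<in> blk Q" using blk_mem[OF P one_in[OF n3]] by auto
  have sub: "blk Q \<subseteq> {1..n}" using part_sub[OF P bm(1)] .
  have pr: "proper_partition n Q" using s_prop[OF n3 sx Q] .
  have ne: "blk Q \<noteq> {1}" "blk Q \<noteq> {1..n}" using zeroC_proper[OF n3 bm(2) sub] pr z by simp_all
  have fin: "finite (blk Q)" using sub finite_subset by blast
  obtain x where x: "x \<in> blk Q" "x \<noteq> 1" using ne(1) bm(2) by blast
  have "{1, x} \<subseteq> blk Q" using x bm by simp
  then have "card {1, x} \<le> card (blk Q)" using card_mono[OF fin] by blast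
  then have c2: "2 \<le> card (blk Q)" using x(2) by simp
  have "blk Q \<subset> {1..n}" using sub ne(2) by blast
  then have "card (blk Q) < card {1..n}" using psubset_card_mono by blast
  then show ?thesis using c2 by simp
qed

lemma zero_type_inj:
  assumes z: "\<forall>Q\<in>s. Q = zeroC n (blk Q)"
  shows "inj_on (\<lambda>Q. card (blk Q)) s"
proof (rule inj_onI)
  fix Q Q' assume Q: "Q \<in> s" and Q': "Q' \<in> s" and e: "card (blk Q) = card (blk Q')"
  have P: "partition_on {1..n} Q" using s_part[OF n3 sx Q] .
  have P': "partition_on {1..n} Q'" using s_part[OF n3 sx Q'] .
  have f: "finite (blk Q)" "finite (blk Q')"
    using part_sub[OF P conjunct1[OF blk_mem[OF P one_in[OF n3]]]]
      part_sub[OF P' conjunct1[OF blk_mem[OF P' one_in[OF n3]]]] finite_subset by blast+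
  from s_chain[OF n3 sx Q Q'] have "blk Q \<subseteq> blk Q' \<or> blk Q' \<subseteq> blk Q"
    using refines_blk[OF P P' one_in[OF n3]] refines_blk[OF P' P one_in[OF n3]] by blast
  then have "blk Q = blk Q'" using card_subset_eq f e by metis
  then show "Q = Q'" using z Q Q' by metis
qed

end


context fixes n :: nat and s :: simplex
  assumes n3: "3 \<le> n" and sx: "simplex n s"
begin

lemma card_2_n1: "card {2..n-1} = n - 2" by simp

lemma Cn_core:
  assumes sc: "s \<in> C_simp n"
  shows "card (core n s) = n - 1"
proof (rule ccontr)
  assume ne: "card (core n s) \<noteq> n - 1"
  let ?C = "core n s"
  have cp: "1 \<in> ?C" "?C \<subseteq> {1..n}" using core_props[OF n3 sx] by auto
  have cf: "finite ?C" using core_fin[OF n3 sx] .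
  have "?C \<subset> {1..n}" using cp(2) C_ne_top[OF n3 sx] by blast
  then have "card ?C < n" using psubset_card_mono[of "{1..n}" ?C] by simp
  then have cl: "card ?C + 1 \<le> n - 1" using ne by simp
  have c1: "1 \<le> card ?C" using cp(1) cf by (metis card_0_eq empty_iff less_one not_le)
  have sA: "s \<subseteq> setA n" and cs: "card s - 1 = n - 3"
    using sc unfolding C_simp_def simplex_dim_def by auto
  have z: "\<forall>Q\<in>s. Q = zeroC n (blk Q)"
  proof
    fix Q assume Q: "Q \<in> s"
    have "Q \<in> setA n" using sA Q by blast
    then show "Q = zeroC n (blk Q)" using A_zeroC[OF n3 s_part[OF n3 sx Q]] unfolding setA_def by simp
  qed
  have sne: "s \<noteq> {}" using sx unfolding simplex_def by simp
  have "card s \<noteq> 0" using sne s_fin[OF n3 sx] by simp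
  then have cs2: "card s = n - 2" using cs n3 by linarith
  have img: "(\<lambda>Q. card (blk Q)) ` s \<subseteq> {2..n-1} - {card ?C + 1}"
  proof
    fix m assume "m \<in> (\<lambda>Q. card (blk Q)) ` s"
    then obtain Q where Q: "Q \<in> s" "m = card (blk Q)" by blast
    have P: "partition_on {1..n} Q" using s_part[OF n3 sx Q(1)] .
    have bds: "2 \<le> m" "m \<le> n - 1" using zero_type_card[OF n3 sx Q(1)] z Q by auto
    have "m \<noteq> card ?C + 1"
    proof
      assume me: "m = card ?C + 1"
      from core_inv[OF n3 sx Q(1)] show False
      proof
        assume "\<exists>E. 1 \<in> E \<and> E \<subseteq> ?C \<and> Q = zeroC n E"
        then obtain E where E: "1 \<in> E" "E \<subseteq> ?C" "Q = zeroC n E" by blast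
        have "blk Q = E" using blk_zeroC[OF n3 E(1)] E(2,3) cp(2) by auto
        then have "m \<le> card ?C" using Q(2) E(2) card_mono[OF cf] by simp
        then show False using me by simp
      next
        assume a: "refines (zeroC n ?C) Q \<and> zeroC n ?C \<noteq> Q"
        have sub: "?C \<subseteq> blk Q" using a refines_zeroC_iff[OF n3 P cp] by simp
        have fb: "finite (blk Q)" using part_sub[OF P conjunct1[OF blk_mem[OF P one_in[OF n3]]]] finite_subset by blast
        have "card (blk Q - ?C) = 1" using me Q(2) card_Diff_subset[OF cf sub] by simp
        then obtain y where y: "blk Q - ?C = {y}" using card_1_singletonE by blast
        have bq: "blk Q = insert y ?C" using y sub by auto
        have "y \<notin> ?C" using y by auto
        moreover have "zeroC n (insert y ?C) \<in> s" using z Q(1) bq by metis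
        ultimately show False using core_max[OF n3 sx] by blast
      qed
    qed
    then show "m \<in> {2..n-1} - {card ?C + 1}" using bds by simp
  qed
  have "card ((\<lambda>Q. card (blk Q)) ` s) = card s" using card_image[OF zero_type_inj[OF n3 sx z]] .
  moreover have "card ((\<lambda>Q. card (blk Q)) ` s) \<le> card ({2..n-1} - {card ?C + 1})"
    using card_mono[OF _ img] by simp
  moreover have "card ({2..n-1} - {card ?C + 1}) = n - 3"
  proof -
    have "card ?C + 1 \<in> {2..n-1}" using c1 cl by simp
    then show ?thesis using card_Diff_singleton[of "card ?C + 1" "{2..n-1}"] by simp
  qed
  ultimately show False using cs2 n3 by simp
qed

lemma coatom_C:
  assumes "card (core n s) = n - 1"
  shows "\<exists>z. {1..n} - core n s = {z}"
proof -
  have "card ({1..n} - core n s) = 1"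
    using card_Diff_subset[OF core_fin[OF n3 sx] core_props(2)[OF n3 sx]] assms n3 by simp
  then show ?thesis using card_1_singletonE by metis
qed

lemma Cn_props:
  assumes sc: "s \<in> C_simp n"
  shows "Uset n s = {}" "vv n s = zeroC n (core n s)" "core n s \<noteq> {1}"
proof -
  let ?C = "core n s"
  have cc: "card ?C = n - 1" using Cn_core[OF sc] .
  obtain z where z: "{1..n} - ?C = {z}" using coatom_C[OF cc] by blast
  have cp: "1 \<in> ?C" "?C \<subseteq> {1..n}" using core_props[OF n3 sx] by auto
  have sA: "s \<subseteq> setA n" using sc unfolding C_simp_def by auto
  show U: "Uset n s = {}"
  proof (rule ccontr)
    assume "Uset n s \<noteq> {}"
    then obtain Q where Q: "Q \<in> Uset n s" by blast
    have Qs: "Q \<in> s" using Q unfolding Uset_def by simp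
    have P: "partition_on {1..n} Q" using s_part[OF n3 sx Qs] .
    have sub: "?C \<subseteq> blk Q" "?C \<noteq> blk Q" using U_props[OF n3 sx Q] by auto
    have bs: "blk Q \<subseteq> {1..n}" using part_sub[OF P conjunct1[OF blk_mem[OF P one_in[OF n3]]]] .
    obtain w where w: "w \<in> blk Q" "w \<notin> ?C" using sub by blast
    then have "w = z" using bs z by blast
    then have "z \<in> blk Q" using w by simp
    then have "{1..n} \<subseteq> blk Q" using sub(1) z by auto
    then have "blk Q = {1..n}" using bs by blast
    moreover have "Q = zeroC n (blk Q)"
      using A_zeroC[OF n3 P] sA Qs unfolding setA_def by blast
    ultimately have "Q = {{1..n}}" using zeroC_top[OF n3] by simp
    then show False using s_prop[OF n3 sx Qs] unfolding proper_partition_def by simp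
  qed
  have "vv n s = alphaC n ?C" unfolding vv_def using U by simp
  then show "vv n s = zeroC n ?C" using alphaC_eq_zeroC[OF n3 cp(1)] z by blast
  show "?C \<noteq> {1}" using cc n3 by auto
qed

lemma crit_not:
  assumes c: "crit n s"
  shows "\<not> lower n s" "\<not> upper n s"
proof -
  have r: "vv n s \<in> s \<and> \<not> upper n s"
  proof (cases "s = {alpha n}")
    case True
    have a1: "alpha n = alphaC n {1}" using alphaC_1[OF n3] by simp
    have ba: "blk (alpha n) = {1}" using a1 blk_alphaC[OF n3, of "{1}"] by simp
    have c1: "core n s = {1}"
    proof (rule ccontr)
      assume ne: "core n s \<noteq> {1}"
      have "zeroC n (core n s) \<in> s" using core_props(3)[OF n3 sx ne] .
      then have "zeroC n (core n s) = alpha n" using True by simp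
      then have "core n s = {1}" using blk_zeroC[OF n3 core_props(1,2)[OF n3 sx]] ba by simp
      then show False using ne by simp
    qed
    have U: "Uset n s = {}" unfolding Uset_def c1 using True ba by simp
    have v: "vv n s = alpha n" unfolding vv_def using U c1 a1 by simp
    have nu: "\<not> upper n s"
    proof
      assume "upper n s"
      then obtain t where t: "lower n t" "s = insert (vv n t) t" unfolding upper_def by blast
      have "t \<noteq> {}" "vv n t \<notin> t" "finite t" using t(1) unfolding lower_def simplex_def by auto
      then have "card s = card t + 1" using t(2) by simp
      moreover have "0 < card t" using \<open>t \<noteq> {}\<close> \<open>finite t\<close> card_gt_0_iff by blast
      ultimately show False using True by simp
    qed
    show ?thesis using v nu True by simp
  next
    case False
    then have sc: "s \<in> C_simp n" using c unfolding crit_def by simp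
    have v: "vv n s = zeroC n (core n s)" and c1: "core n s \<noteq> {1}" using Cn_props[OF sc] by auto
    have vin: "vv n s \<in> s" using v core_props(3)[OF n3 sx c1] by simp
    have nu: "\<not> upper n s"
    proof
      assume "upper n s"
      then obtain t where t: "lower n t" "s = insert (vv n t) t" unfolding upper_def by blast
      have tx: "simplex n t" and nt: "vv n t \<notin> t" and e: "vv n s = vv n t"
        using t unfolding lower_def by auto
      have "core n t = blk (vv n t)" using vv_blk[OF n3 tx] by simp
      also have "\<dots> = blk (vv n s)" using e by simp
      also have "\<dots> = core n s" using vv_blk[OF n3 sx] .
      finally have ct: "core n t = core n s" .
      have "zeroC n (core n t) \<in> t" using core_props(3)[OF n3 tx] ct c1 by simp
      then show False using nt e v ct by simp
    qed
    show ?thesis using vin nu by simp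
  qed
  then show "\<not> lower n s" "\<not> upper n s" unfolding lower_def by auto
qed

end

context fixes n :: nat and s :: simplex
  assumes n3: "3 \<le> n" and sx: "simplex n s"
begin

lemma not_crit_case_zero:
  assumes vin: "vv n s \<in> s" and vz: "vv n s = zeroC n (core n s)"
  shows "s \<in> C_simp n"
proof -
  let ?C = "core n s"
  have cp: "1 \<in> ?C" "?C \<subseteq> {1..n}" using core_props[OF n3 sx] by auto
  have c1: "?C \<noteq> {1}"
  proof
    assume "?C = {1}"
    then have "vv n s = bot0 n" using vz zeroC_1[OF n3] by simp
    then show False using vv_part[OF n3 sx] unfolding proper_partition_def bot0_def by simp
  qed
  have U: "Uset n s = {}"
  proof (rule ccontr)
    assume ne: "Uset n s \<noteq> {}"
    have u: "minU n s \<in> Uset n s" using minU_props(1)[OF n3 sx ne] .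
    have "splitC (minU n s) ?C = zeroC n ?C" using vz ne unfolding vv_def by simp
    then obtain y where "y \<notin> ?C" "minU n s = zeroC n (insert y ?C)"
      using split_eq_zeroC[OF n3 minU_part(1)[OF n3 sx ne] cp(1) U_props(1,2)[OF n3 sx u]] by blast
    then show False using core_max[OF n3 sx] minU_part(2)[OF n3 sx ne] by metis
  qed
  have "alphaC n ?C = zeroC n ?C" using vz U unfolding vv_def by simp
  then obtain z where z: "{1..n} - ?C = {z}" using alphaC_eq_zeroC[OF n3 cp(1)] by blast
  have cc: "card ?C = n - 1"
    using card_Diff_subset[OF core_fin[OF n3 sx] cp(2)] z n3 by simp
  have all: "\<forall>Q\<in>s. \<exists>E. 1 \<in> E \<and> E \<subseteq> ?C \<and> Q = zeroC n E"
  proof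
    fix Q assume Q: "Q \<in> s"
    have P: "partition_on {1..n} Q" using s_part[OF n3 sx Q] .
    from core_inv[OF n3 sx Q] show "\<exists>E. 1 \<in> E \<and> E \<subseteq> ?C \<and> Q = zeroC n E"
    proof
      assume a: "refines (zeroC n ?C) Q \<and> zeroC n ?C \<noteq> Q"
      have sub: "?C \<subseteq> blk Q" using a refines_zeroC_iff[OF n3 P cp] by simp
      have "Q \<notin> Uset n s" using U by simp
      then have "blk Q \<subseteq> ?C" using Q unfolding Uset_def by simp
      then have "blk Q = ?C" using sub by simp
      then have "Q = zeroC n ?C" using zeroC_of_coatom[OF n3 P _ z] by simp
      then show ?thesis using a by simp
    qed simp
  qed
  have z2: "\<forall>Q\<in>s. Q = zeroC n (blk Q)"
  proof
    fix Q assume "Q \<in> s"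
    then obtain E where E: "1 \<in> E" "E \<subseteq> ?C" "Q = zeroC n E" using all by blast
    then have "blk Q = E" using blk_zeroC[OF n3 E(1)] cp(2) by auto
    then show "Q = zeroC n (blk Q)" using E by simp
  qed
  have sA: "s \<subseteq> setA n"
  proof
    fix Q assume Q: "Q \<in> s"
    obtain E where E: "1 \<in> E" "E \<subseteq> ?C" "Q = zeroC n E" using all Q by blast
    have "\<forall>B\<in>Q. 1 \<notin> B \<longrightarrow> card B = 1" using zeroC_blocks[OF n3 _ _ E(1)] E(3) by blast
    then show "Q \<in> setA n" unfolding setA_def using s_prop[OF n3 sx Q] by simp
  qed
  have img: "(\<lambda>Q. card (blk Q)) ` s = {2..n-1}"
  proof
    show "(\<lambda>Q. card (blk Q)) ` s \<subseteq> {2..n-1}"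
      using zero_type_card[OF n3 sx] z2 by auto
    show "{2..n-1} \<subseteq> (\<lambda>Q. card (blk Q)) ` s"
    proof
      fix m assume m: "m \<in> {2..n-1}"
      then obtain E where E: "card E = m" "1 \<in> E" "E \<subseteq> ?C" "zeroC n E \<in> s"
        using core_sat[OF n3 sx, of m] cc by auto
      have "blk (zeroC n E) = E" using blk_zeroC[OF n3 E(2)] E(3) cp(2) by auto
      then show "m \<in> (\<lambda>Q. card (blk Q)) ` s" using E by (metis image_eqI)
    qed
  qed
  have "card s = n - 2"
    using card_image[OF zero_type_inj[OF n3 sx z2]] img by simp
  then have "simplex_dim s = n - 3" unfolding simplex_dim_def by simp
  then show ?thesis unfolding C_simp_def using sx sA by simp
qed

lemma not_lower_upper_crit:
  assumes nl: "\<not> lower n s" and nu: "\<not> upper n s"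
  shows "crit n s"
proof -
  let ?C = "core n s"
  have vin: "vv n s \<in> s" using nl lower_iff[OF n3 sx] by simp
  show ?thesis
  proof (cases "vv n s = zeroC n ?C")
    case True then show ?thesis using not_crit_case_zero[OF vin True] unfolding crit_def by simp
  next
    case vz: False
    let ?t = "s - {vv n s}"
    have vp: "partition_on {1..n} (vv n s)" using vv_part[OF n3 sx] by simp
    have vt: "vv n ?t = vv n s" using stab(4)[OF n3 sx vp vv_blk[OF n3 sx] vz] .
    show ?thesis
    proof (cases "?t = {}")
      case False
      have tx: "simplex n ?t" using sx False unfolding simplex_def by auto
      have "vv n ?t \<notin> ?t" using vt by simp
      then have "lower n ?t" using lower_iff[OF n3 tx] by simp
      moreover have "s = insert (vv n ?t) ?t" using vt vin by auto
      ultimately have "upper n s" unfolding upper_def by blast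
      then show ?thesis using nu by simp
    next
      case True
      then have s1: "s = {vv n s}" using vin by auto
      have U: "Uset n s = {}"
      proof (rule ccontr)
        assume ne: "Uset n s \<noteq> {}"
        have u: "minU n s \<in> Uset n s" using minU_props(1)[OF n3 sx ne] .
        then have "minU n s \<in> s" and "\<not> blk (minU n s) \<subseteq> ?C" unfolding Uset_def by auto
        then have "minU n s = vv n s" using s1 by auto
        then show False using \<open>\<not> blk (minU n s) \<subseteq> ?C\<close> vv_blk[OF n3 sx] by simp
      qed
      have va: "vv n s = alphaC n ?C" unfolding vv_def using U by simp
      have "?C = {1}"
      proof (rule ccontr)
        assume ne: "?C \<noteq> {1}"
        have "zeroC n ?C \<in> s" using core_props(3)[OF n3 sx ne] .
        then show False using s1 vz by auto
      qed
      then have "s = {alpha n}" using s1 va alphaC_1[OF n3] by simp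
      then show ?thesis unfolding crit_def by simp
    qed
  qed
qed

lemma crit_iff: "crit n s \<longleftrightarrow> \<not> lower n s \<and> \<not> upper n s"
  using crit_not[OF n3 sx] not_lower_upper_crit by blast

end

definition eU :: "nat \<Rightarrow> simplex \<Rightarrow> nat" where
  "eU n r = (if Uset n r \<noteq> {} then n + 1 + card (minU n r) else 0)"

definition pot :: "nat \<Rightarrow> simplex \<Rightarrow> nat" where
  "pot n r = (card r * (n + 1) + card (core n r)) * (2 * n + 2) + eU n r"

lemma lex_lt:
  fixes X1 X2 K e1 e2 :: nat
  assumes "X1 < X2" "e1 < K"
  shows "X1 * K + e1 < X2 * K + e2"
proof -
  have "Suc X1 \<le> X2" using assms(1) by simp
  then have "Suc X1 * K \<le> X2 * K" using mult_le_mono1 by blast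
  then show ?thesis using assms(2) by simp
qed

lemma lex_lt2:
  fixes a1 a2 c1 c2 n :: nat
  assumes "a1 < a2" "c1 \<le> n"
  shows "a1 * (n + 1) + c1 < a2 * (n + 1) + c2"
  using lex_lt[OF assms(1), of c1 "n + 1" c2] assms(2) by simp

context fixes n :: nat and r :: simplex
  assumes n3: "3 \<le> n" and rx: "simplex n r"
begin

lemma core_card_le: "card (core n r) \<le> n"
  using card_mono[OF _ core_props(2)[OF n3 rx]] by simp

lemma eU_le: "eU n r < 2 * n + 2"
proof (cases "Uset n r \<noteq> {}")
  case True
  have "card (minU n r) \<le> n" using part_card_le[OF n3 minU_part(1)[OF n3 rx True]] .
  then show ?thesis unfolding eU_def using True by simp
next
  case False then show ?thesis unfolding eU_def by simp
qed

end

lemma pot_card_lt: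
  assumes n3: "3 \<le> n" and r1: "simplex n r1" and r2: "simplex n r2" and c: "card r1 < card r2"
  shows "pot n r1 < pot n r2"
  unfolding pot_def
  by (rule lex_lt[OF lex_lt2[OF c core_card_le[OF n3 r1]] eU_le[OF n3 r1]])

lemma pot_core_lt:
  assumes n3: "3 \<le> n" and r1: "simplex n r1" and r2: "simplex n r2" and c: "card r1 = card r2"
    and cc: "card (core n r1) < card (core n r2)"
  shows "pot n r1 < pot n r2"
  unfolding pot_def
  by (rule lex_lt) (use c cc eU_le[OF n3 r1] in auto)

lemma pot_e_lt:
  assumes c: "card r1 = card r2" and cc: "card (core n r1) = card (core n r2)"
    and e: "eU n r1 < eU n r2"
  shows "pot n r1 < pot n r2"
  unfolding pot_def using c cc e by simp

lemma step_lemma: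
  assumes n3: "3 \<le> n" and ls: "lower n s" and lt: "lower n t"
    and sub: "s \<subseteq> insert (vv n t) t" and ne: "insert (vv n s) s \<noteq> insert (vv n t) t"
  shows "pot n (insert (vv n s) s) < pot n (insert (vv n t) t)"
proof -
  let ?v = "vv n s" and ?v' = "vv n t"
  let ?r = "insert ?v s" and ?b = "insert ?v' t"
  have sx: "simplex n s" and vs: "?v \<notin> s" and rx: "simplex n ?r" using ls unfolding lower_def by auto
  have tx: "simplex n t" and vt: "?v' \<notin> t" and bx: "simplex n ?b" and vb: "vv n ?b = ?v'"
    using lt unfolding lower_def by auto
  have sb: "s \<noteq> ?b"
  proof
    assume "s = ?b"
    then have "vv n s = ?v'" using vb by simp
    then show False using vs \<open>s = ?b\<close> by simp
  qed
  have fb: "finite ?b" using bx unfolding simplex_def by simp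
  have fs: "finite s" using sx unfolding simplex_def by simp
  have psub: "s \<subset> ?b" using sub sb by blast
  have crd: "card ?r = card s + 1" using vs fs by simp
  have "card s < card ?b" using psubset_card_mono[OF fb psub] .
  then have cle: "card ?r \<le> card ?b" using crd by simp
  show ?thesis
  proof (cases "card ?r < card ?b")
    case True then show ?thesis using pot_card_lt[OF n3 rx bx] by simp
  next
    case False
    then have ceq: "card ?b = card ?r" using cle by simp
    then have "card (?b - s) = 1" using card_Diff_subset[OF fs sub] crd by simp
    then obtain w where w: "?b - s = {w}" using card_1_singletonE by blast
    have bw: "?b = insert w s" using w sub by blast
    have ws: "w \<notin> s" using w by blast
    have wv: "w \<noteq> ?v" using bw ne by blast
    have ri: "Uset n ?r = Uset n s" "core n ?r = core n s" using U_insert_vv[OF n3 sx vs] by auto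
    have cm: "core n s \<subseteq> core n ?b" using core_mono[OF n3 sx bx sub] .
    have cbf: "finite (core n ?b)" using core_fin[OF n3 bx] .
    show ?thesis
    proof (cases "card (core n s) < card (core n ?b)")
      case True then show ?thesis using pot_core_lt[OF n3 rx bx ceq[symmetric]] ri(2) by simp
    next
      case False
      then have "card (core n ?b) \<le> card (core n s)" by simp
      then have cb: "core n ?b = core n s" using card_seteq[OF cbf cm] by simp
      have Ub: "Uset n s \<subseteq> Uset n ?b" unfolding Uset_def cb using sub by blast
      have vbin: "vv n ?b \<in> ?b" using vb by simp
      have notv: "vv n ?b \<noteq> ?v"
      proof
        assume "vv n ?b = ?v"
        then have "?v \<in> insert w s" using vbin bw by simp
        then show False using wv vs by simp
      qed
      have e: "eU n ?r < eU n ?b"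
      proof (cases "Uset n s = {}")
        case True
        have "Uset n ?b \<noteq> {}"
        proof
          assume "Uset n ?b = {}"
          then have "vv n ?b = alphaC n (core n s)" using vv_def[of n ?b] cb by simp
          moreover have "?v = alphaC n (core n s)" using vv_def[of n s] True by simp
          ultimately show False using notv by simp
        qed
        then show ?thesis unfolding eU_def using True ri(1) by simp
      next
        case ne2: False
        have neb: "Uset n ?b \<noteq> {}" using ne2 Ub by blast
        have u: "minU n s \<in> Uset n ?b" using minU_props(1)[OF n3 sx ne2] Ub by blast
        have ref: "refines (minU n ?b) (minU n s)" using minU_props(2)[OF n3 bx neb u] .
        have neq: "minU n ?b \<noteq> minU n s"
        proof
          assume eq: "minU n ?b = minU n s"
          have "vv n ?b = splitC (minU n ?b) (core n ?b)" using vv_def[of n ?b] neb by simp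
          also have "\<dots> = splitC (minU n s) (core n s)" using eq cb by simp
          also have "\<dots> = ?v" using vv_def[of n s] ne2 by simp
          finally show False using notv by simp
        qed
        have "card (minU n s) < card (minU n ?b)"
          using refines_card_less[OF minU_part(1)[OF n3 bx neb] minU_part(1)[OF n3 sx ne2] ref _ neq] by simp
        moreover have "minU n ?r = minU n s" using minU_cong[OF ri(1)] .
        ultimately show ?thesis unfolding eU_def using ne2 neb ri(1) by simp
      qed
      show ?thesis using pot_e_lt[OF ceq[symmetric] _ e] ri(2) cb by simp
    qed
  qed
qed


lemma act_simp_insert: "act_simp g (insert x s) = insert (act_part g x) (act_simp g s)"
  unfolding act_simp_def by simp

context fixes n :: nat and G :: "(nat \<Rightarrow> nat) set"
  assumes n3: "3 \<le> n" and sg: "subgroup_S1_Snm1 n G"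
begin

lemma G_id: "id \<in> G" using sg unfolding subgroup_S1_Snm1_def by simp
lemma G_perm: "g \<in> G \<Longrightarrow> g permutes {1..n}" using sg unfolding subgroup_S1_Snm1_def by simp
lemma G_1: "g \<in> G \<Longrightarrow> g 1 = 1" using sg unfolding subgroup_S1_Snm1_def by simp
lemma G_comp: "g \<in> G \<Longrightarrow> k \<in> G \<Longrightarrow> g \<circ> k \<in> G" using sg unfolding subgroup_S1_Snm1_def by simp
lemma G_inv: "g \<in> G \<Longrightarrow> inv g \<in> G" using sg unfolding subgroup_S1_Snm1_def by simp

lemma orbit_self: "s \<in> orbit G s"
  unfolding orbit_def using G_id act_simp_id by (metis imageI)

lemma orbit_mem: "t \<in> orbit G s \<longleftrightarrow> (\<exists>g\<in>G. t = act_simp g s)"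
  unfolding orbit_def by blast

lemma orbit_eq:
  assumes "t \<in> orbit G s"
  shows "orbit G t = orbit G s"
proof -
  obtain g where g: "g \<in> G" "t = act_simp g s" using assms orbit_mem by blast
  show ?thesis
  proof
    show "orbit G t \<subseteq> orbit G s"
    proof
      fix x assume "x \<in> orbit G t"
      then obtain k where k: "k \<in> G" "x = act_simp k t" using orbit_mem by blast
      then have "x = act_simp (k \<circ> g) s" using g act_simp_comp by simp
      then show "x \<in> orbit G s" using G_comp[OF k(1) g(1)] orbit_mem by blast
    qed
    show "orbit G s \<subseteq> orbit G t"
    proof
      fix x assume "x \<in> orbit G s"
      then obtain k where k: "k \<in> G" "x = act_simp k s" using orbit_mem by blast
      have "inv g \<circ> g = id" using permutes_inv_o(2)[OF G_perm[OF g(1)]] .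
      then have "act_simp (k \<circ> inv g) t = act_simp k s"
        using g act_simp_comp act_simp_id by (metis comp_assoc comp_id)
      then have "x = act_simp (k \<circ> inv g) t" using k by simp
      then show "x \<in> orbit G t" using G_comp[OF k(1) G_inv[OF g(1)]] orbit_mem by blast
    qed
  qed
qed

lemma orbit_eq_iff: "orbit G s = orbit G t \<longleftrightarrow> t \<in> orbit G s"
  using orbit_eq orbit_self by metis

lemma simplex_G: "g \<in> G \<Longrightarrow> simplex n (act_simp g s) \<longleftrightarrow> simplex n s"
  using simplex_act_iff[OF n3 G_perm[of g] G_1[of g]] by blast

lemma card_G: "g \<in> G \<Longrightarrow> card (act_simp g s) = card s"
  using card_act_simp[OF g_inj[OF n3 G_perm[of g]]] by blast

lemma orbit_card: "t \<in> orbit G s \<Longrightarrow> card t = card s"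
  using orbit_mem card_G by auto

lemma orbit_simplex: "t \<in> orbit G s \<Longrightarrow> simplex n t \<longleftrightarrow> simplex n s"
  using orbit_mem simplex_G by auto

lemma lower_G:
  assumes g: "g \<in> G" and ls: "lower n s"
  shows "lower n (act_simp g s) \<and> act_simp g (insert (vv n s) s) = insert (vv n (act_simp g s)) (act_simp g s)"
proof -
  have sx: "simplex n s" using ls unfolding lower_def by simp
  have gsx: "simplex n (act_simp g s)" using simplex_G[OF g] sx by simp
  have va: "vv n (act_simp g s) = act_part g (vv n s)" using vv_act[OF n3 G_perm[OF g] G_1[OF g] sx] .
  have i: "inj (act_part g)" using inj_act_part[OF g_inj[OF n3 G_perm[OF g]]] .
  have "vv n s \<notin> s" using ls unfolding lower_def by simp
  then have "act_part g (vv n s) \<notin> act_simp g s" using i unfolding act_simp_def inj_def by blast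
  then have "lower n (act_simp g s)" using lower_iff[OF n3 gsx] va by simp
  then show ?thesis using va act_simp_insert by simp
qed

lemma lower_G_iff:
  assumes g: "g \<in> G" and sx: "simplex n s"
  shows "lower n (act_simp g s) \<longleftrightarrow> lower n s"
proof
  assume "lower n (act_simp g s)"
  then have "lower n (act_simp (inv g) (act_simp g s))" using lower_G[OF G_inv[OF g]] by blast
  moreover have "act_simp (inv g) (act_simp g s) = s"
    using act_simp_comp[of "inv g" g s] permutes_inv_o(2)[OF G_perm[OF g]] act_simp_id by simp
  ultimately show "lower n s" by simp
qed (use lower_G[OF g] in blast)

lemma upper_G:
  assumes g: "g \<in> G" and u: "upper n r"
  shows "upper n (act_simp g r)"
proof -
  obtain s where s: "lower n s" "r = insert (vv n s) s" using u unfolding upper_def by blast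
  show ?thesis using lower_G[OF g s(1)] s(2) unfolding upper_def by blast
qed

lemma pot_G:
  assumes g: "g \<in> G" and rx: "simplex n r"
  shows "pot n (act_simp g r) = pot n r"
proof -
  have gp: "g permutes {1..n}" and g1: "g 1 = 1" using G_perm[OF g] G_1[OF g] by auto
  have gi: "inj g" using g_inj[OF n3 gp] .
  have c: "card (act_simp g r) = card r" using card_G[OF g] .
  have cc: "card (core n (act_simp g r)) = card (core n r)"
    using core_act[OF n3 gp g1 rx] gi by (simp add: card_image inj_on_subset)
  have u: "Uset n (act_simp g r) \<noteq> {} \<longleftrightarrow> Uset n r \<noteq> {}" using Uset_act[OF n3 gp g1 rx] by simp
  have e: "eU n (act_simp g r) = eU n r"
  proof (cases "Uset n r \<noteq> {}")
    case True
    have "card (minU n (act_simp g r)) = card (minU n r)"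
      using minU_act[OF n3 gp g1 rx True] card_act_part[OF gi] by simp
    then show ?thesis unfolding eU_def using u True by simp
  next
    case False then show ?thesis unfolding eU_def using u by simp
  qed
  show ?thesis unfolding pot_def using c cc e by simp
qed

lemma pot_orbit: "simplex n r \<Longrightarrow> t \<in> orbit G r \<Longrightarrow> pot n t = pot n r"
  using orbit_mem pot_G by auto

lemma quot_less_card:
  assumes sx: "simplex n s" and tx: "simplex n t" and q: "quot_less G (orbit G s) (orbit G t)"
  shows "card s < card t"
proof -
  obtain \<sigma> \<tau> g where st: "\<sigma> \<in> orbit G s" "\<tau> \<in> orbit G t" "g \<in> G" "\<sigma> \<subseteq> act_simp g \<tau>"
    using q unfolding quot_less_def quot_le_def by blast
  have ne: "orbit G s \<noteq> orbit G t" using q unfolding quot_less_def by simp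
  have gt: "act_simp g \<tau> \<in> orbit G t"
  proof -
    obtain k where "k \<in> G" "\<tau> = act_simp k t" using st(2) orbit_mem by blast
    then have "act_simp g \<tau> = act_simp (g \<circ> k) t" using act_simp_comp by simp
    then show ?thesis using G_comp[OF st(3) \<open>k \<in> G\<close>] orbit_mem by blast
  qed
  have c1: "card \<sigma> = card s" using orbit_card[OF st(1)] .
  have c2: "card (act_simp g \<tau>) = card t" using orbit_card[OF gt] .
  have fin: "finite (act_simp g \<tau>)" using orbit_simplex[OF gt] tx unfolding simplex_def by simp
  have le: "card \<sigma> \<le> card (act_simp g \<tau>)" using card_mono[OF fin st(4)] .
  show ?thesis
  proof (rule ccontr)
    assume "\<not> card s < card t"
    then have "card (act_simp g \<tau>) \<le> card \<sigma>" using c1 c2 le by simp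
    then have "\<sigma> = act_simp g \<tau>" using card_seteq[OF fin st(4)] by simp
    then have "orbit G s = orbit G t" using orbit_eq[OF st(1)] orbit_eq[OF gt] by simp
    then show False using ne by simp
  qed
qed

end

definition Mat :: "nat \<Rightarrow> (nat \<Rightarrow> nat) set \<Rightarrow> (simplex set \<times> simplex set) set" where
  "Mat n G = {(orbit G s, orbit G (insert (vv n s) s)) | s. lower n s}"

lemma lower_simplex: "lower n s \<Longrightarrow> simplex n s" unfolding lower_def by simp
lemma lower_rsimplex: "lower n s \<Longrightarrow> simplex n (insert (vv n s) s)" unfolding lower_def by simp
lemma lower_vv: "lower n s \<Longrightarrow> vv n (insert (vv n s) s) = vv n s" unfolding lower_def by simp
lemma lower_notin: "lower n s \<Longrightarrow> vv n s \<notin> s" unfolding lower_def by simp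

context fixes n :: nat and G :: "(nat \<Rightarrow> nat) set"
  assumes n3: "3 \<le> n" and sg: "subgroup_S1_Snm1 n G"
begin

lemma upper_unique:
  assumes ls: "lower n s" and ls': "lower n s'" and g: "g \<in> G"
    and e: "insert (vv n s') s' = act_simp g (insert (vv n s) s)"
  shows "s' = act_simp g s"
proof -
  have lg: "lower n (act_simp g s)" and eg: "act_simp g (insert (vv n s) s) = insert (vv n (act_simp g s)) (act_simp g s)"
    using lower_G[OF n3 sg g ls] by auto
  let ?t = "act_simp g s"
  have e2: "insert (vv n s') s' = insert (vv n ?t) ?t" using e eg by simp
  have "vv n s' = vv n (insert (vv n s') s')" using lower_vv[OF ls'] by simp
  also have "\<dots> = vv n (insert (vv n ?t) ?t)" using e2 by simp
  also have "\<dots> = vv n ?t" using lower_vv[OF lg] .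
  finally have vv_eq: "vv n s' = vv n ?t" .
  have "s' = insert (vv n s') s' - {vv n s'}" using lower_notin[OF ls'] by simp
  also have "\<dots> = insert (vv n ?t) ?t - {vv n ?t}" using e2 vv_eq by simp
  also have "\<dots> = ?t" using lower_notin[OF lg] by simp
  finally show ?thesis .
qed

lemma mat_cover:
  assumes ls: "lower n s"
  shows "covers (quot_faces n G) (quot_less G) (orbit G (insert (vv n s) s)) (orbit G s)"
proof -
  let ?r = "insert (vv n s) s"
  have sx: "simplex n s" and rx: "simplex n ?r" using lower_simplex[OF ls] lower_rsimplex[OF ls] by auto
  have cr: "card ?r = card s + 1" using lower_notin[OF ls] sx unfolding simplex_def by simp
  have f1: "orbit G s \<in> quot_faces n G" unfolding quot_faces_def using sx by blast
  have f2: "orbit G ?r \<in> quot_faces n G" unfolding quot_faces_def using rx by blast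
  have ql: "quot_le G (orbit G s) (orbit G ?r)"
    unfolding quot_le_def using orbit_self[OF n3 sg] G_id[OF n3 sg] act_simp_id by (metis subset_insertI)
  have ne: "orbit G s \<noteq> orbit G ?r"
  proof
    assume "orbit G s = orbit G ?r"
    then have "?r \<in> orbit G s" using orbit_eq_iff[OF n3 sg] by simp
    then have "card ?r = card s" using orbit_card[OF n3 sg] by simp
    then show False using cr by simp
  qed
  have nb: "\<not> (\<exists>c\<in>quot_faces n G. quot_less G (orbit G s) c \<and> quot_less G c (orbit G ?r))"
  proof
    assume "\<exists>c\<in>quot_faces n G. quot_less G (orbit G s) c \<and> quot_less G c (orbit G ?r)"
    then obtain u where u: "simplex n u" "quot_less G (orbit G s) (orbit G u)" "quot_less G (orbit G u) (orbit G ?r)"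
      unfolding quot_faces_def by blast
    have "card s < card u" using quot_less_card[OF n3 sg sx u(1) u(2)] .
    moreover have "card u < card ?r" using quot_less_card[OF n3 sg u(1) rx u(3)] .
    ultimately show False using cr by simp
  qed
  show ?thesis unfolding covers_def quot_less_def using f1 f2 ql ne nb unfolding quot_less_def by blast
qed

lemma mat_disj:
  assumes p: "p \<in> Mat n G" and q: "q \<in> Mat n G" and pq: "p \<noteq> q"
  shows "{fst p, snd p} \<inter> {fst q, snd q} = {}"
proof -
  obtain s where s: "lower n s" "p = (orbit G s, orbit G (insert (vv n s) s))" using p unfolding Mat_def by blast
  obtain s' where s': "lower n s'" "q = (orbit G s', orbit G (insert (vv n s') s'))" using q unfolding Mat_def by blast
  let ?r = "insert (vv n s) s" and ?r' = "insert (vv n s') s'"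
  have sx: "simplex n s" using lower_simplex[OF s(1)] .
  have s'x: "simplex n s'" using lower_simplex[OF s'(1)] .
  have same: "p = q" if "orbit G s = orbit G s'" for dummy :: bool
  proof -
    have "s' \<in> orbit G s" using that orbit_eq_iff[OF n3 sg] by simp
    then obtain g where g: "g \<in> G" "s' = act_simp g s" using orbit_mem[OF n3 sg] by blast
    have "?r' = act_simp g ?r" using lower_G[OF n3 sg g(1) s(1)] g(2) by simp
    then have "?r' \<in> orbit G ?r" using g(1) orbit_mem[OF n3 sg] by blast
    then have "orbit G ?r = orbit G ?r'" using orbit_eq_iff[OF n3 sg] by simp
    then show ?thesis using s s' that by simp
  qed
  have cross: "orbit G a \<noteq> orbit G (insert (vv n b) b)" if la: "lower n a" and lb: "lower n b" for a b
  proof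
    assume "orbit G a = orbit G (insert (vv n b) b)"
    moreover have "a \<in> orbit G a" by (rule orbit_self[OF n3 sg])
    ultimately have "a \<in> orbit G (insert (vv n b) b)" by simp
    then obtain g where g: "g \<in> G" "a = act_simp g (insert (vv n b) b)" using orbit_mem[OF n3 sg] by blast
    have "a = insert (vv n (act_simp g b)) (act_simp g b)" using lower_G[OF n3 sg g(1) lb] g(2) by simp
    moreover have "vv n (insert (vv n (act_simp g b)) (act_simp g b)) = vv n (act_simp g b)"
      using lower_vv[OF conjunct1[OF lower_G[OF n3 sg g(1) lb]]] .
    ultimately have "vv n a \<in> a" by simp
    then show False using lower_notin[OF la] by simp
  qed
  have c1: "orbit G s \<noteq> orbit G s'" using same pq by blast
  have c2: "orbit G s \<noteq> orbit G ?r'" using cross[OF s(1) s'(1)] .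
  have c3: "orbit G ?r \<noteq> orbit G s'" using cross[OF s'(1) s(1)] by (rule not_sym)
  have c4: "orbit G ?r \<noteq> orbit G ?r'"
  proof
    assume "orbit G ?r = orbit G ?r'"
    then have "?r' \<in> orbit G ?r" using orbit_eq_iff[OF n3 sg] by simp
    then obtain g where g: "g \<in> G" "?r' = act_simp g ?r" using orbit_mem[OF n3 sg] by blast
    have "s' = act_simp g s" using upper_unique[OF s(1) s'(1) g] .
    then have "s' \<in> orbit G s" using g(1) orbit_mem[OF n3 sg] by blast
    then have "orbit G s = orbit G s'" using orbit_eq_iff[OF n3 sg] by simp
    then show False using c1 by simp
  qed
  show ?thesis unfolding s(2) s'(2) using c1 c2 c3 c4 by auto
qed

lemma mat_partial: "partial_matching (quot_faces n G) (quot_less G) (Mat n G)"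
  unfolding partial_matching_def
proof (intro conjI ballI impI)
  fix x assume "x \<in> Mat n G"
  then obtain s where s: "lower n s" "x = (orbit G s, orbit G (insert (vv n s) s))" unfolding Mat_def by blast
  show "case x of (a, b) \<Rightarrow> covers (quot_faces n G) (quot_less G) b a" using mat_cover[OF s(1)] s(2) by simp
next
  fix p q assume "p \<in> Mat n G" "q \<in> Mat n G" "p \<noteq> q"
  then show "{fst p, snd p} \<inter> {fst q, snd q} = {}" using mat_disj by blast
qed

end

lemma no_cycle:
  fixes f :: "nat \<Rightarrow> nat"
  assumes t: "2 \<le> t" and h: "\<forall>i<t. f i < f (Suc i mod t)"
  shows False
proof -
  have a: "i < t \<Longrightarrow> f 0 + i \<le> f i" for i
  proof (induction i)
    case 0 then show ?case by simp
  next
    case (Suc i)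
    then have "i < t" by simp
    have "Suc i mod t = Suc i" using Suc.prems by simp
    then have "f i < f (Suc i)" using h \<open>i < t\<close> by metis
    then show ?case using Suc.IH[OF \<open>i < t\<close>] by simp
  qed
  have l: "t - 1 < t" using t by simp
  have "Suc (t - 1) mod t = 0" using t by simp
  then have "f (t - 1) < f 0" using h l by metis
  moreover have "f 0 + (t - 1) \<le> f (t - 1)" using a[OF l] .
  ultimately show False by simp
qed

context fixes n :: nat and G :: "(nat \<Rightarrow> nat) set"
  assumes n3: "3 \<le> n" and sg: "subgroup_S1_Snm1 n G"
begin

definition "PotO X = pot n (SOME r. r \<in> X)"

lemma PotO_orbit: "simplex n r \<Longrightarrow> PotO (orbit G r) = pot n r"
proof -
  assume rx: "simplex n r"
  have "(SOME x. x \<in> orbit G r) \<in> orbit G r" using orbit_self[OF n3 sg] by (metis someI_ex)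
  then show ?thesis unfolding PotO_def using pot_orbit[OF n3 sg rx] by simp
qed

lemma mat_step:
  assumes p: "(A, B) \<in> Mat n G" and q: "(A', B') \<in> Mat n G"
    and ql: "quot_less G A B'" and ne: "B \<noteq> B'"
  shows "PotO B < PotO B'"
proof -
  obtain s where s: "lower n s" "A = orbit G s" "B = orbit G (insert (vv n s) s)" using p unfolding Mat_def by blast
  obtain s' where s': "lower n s'" "A' = orbit G s'" "B' = orbit G (insert (vv n s') s')" using q unfolding Mat_def by blast
  obtain \<sigma> \<tau> g where st: "\<sigma> \<in> A" "\<tau> \<in> B'" "g \<in> G" "\<sigma> \<subseteq> act_simp g \<tau>"
    using ql unfolding quot_less_def quot_le_def by blast
  obtain k where k: "k \<in> G" "\<sigma> = act_simp k s" using st(1) s(2) orbit_mem[OF n3 sg] by blast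
  obtain k' where k': "k' \<in> G" "\<tau> = act_simp k' (insert (vv n s') s')" using st(2) s'(3) orbit_mem[OF n3 sg] by blast
  have gk: "g \<circ> k' \<in> G" using G_comp[OF n3 sg st(3) k'(1)] .
  let ?u = "act_simp (g \<circ> k') s'"
  have lu: "lower n ?u" and eu: "act_simp (g \<circ> k') (insert (vv n s') s') = insert (vv n ?u) ?u"
    using lower_G[OF n3 sg gk s'(1)] by auto
  have gt: "act_simp g \<tau> = insert (vv n ?u) ?u" using k'(2) eu act_simp_comp by simp
  have ls: "lower n \<sigma>" and es: "act_simp k (insert (vv n s) s) = insert (vv n \<sigma>) \<sigma>"
    using lower_G[OF n3 sg k(1) s(1)] k(2) by auto
  have sub: "\<sigma> \<subseteq> insert (vv n ?u) ?u" using st(4) gt by simp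
  have "act_simp k (insert (vv n s) s) \<in> orbit G (insert (vv n s) s)" using k(1) orbit_mem[OF n3 sg] by blast
  then have inB0: "insert (vv n \<sigma>) \<sigma> \<in> orbit G (insert (vv n s) s)" using es by simp
  then have inB: "insert (vv n \<sigma>) \<sigma> \<in> B" using s(3) by simp
  have "act_simp (g \<circ> k') (insert (vv n s') s') \<in> orbit G (insert (vv n s') s')" using gk orbit_mem[OF n3 sg] by blast
  then have inB0': "insert (vv n ?u) ?u \<in> orbit G (insert (vv n s') s')" using eu by simp
  then have inB': "insert (vv n ?u) ?u \<in> B'" using s'(3) by simp
  have rne: "insert (vv n \<sigma>) \<sigma> \<noteq> insert (vv n ?u) ?u"
  proof
    assume e: "insert (vv n \<sigma>) \<sigma> = insert (vv n ?u) ?u"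
    have "B = orbit G (insert (vv n \<sigma>) \<sigma>)"
      using orbit_eq[OF n3 sg inB0] s(3) by simp
    moreover have "B' = orbit G (insert (vv n ?u) ?u)"
      using orbit_eq[OF n3 sg inB0'] s'(3) by simp
    ultimately show False using e ne by simp
  qed
  have lt: "pot n (insert (vv n \<sigma>) \<sigma>) < pot n (insert (vv n ?u) ?u)"
    using step_lemma[OF n3 ls lu sub rne] .
  have "PotO B = pot n (insert (vv n \<sigma>) \<sigma>)"
    using PotO_orbit[OF lower_rsimplex[OF s(1)]] s(3) pot_orbit[OF n3 sg lower_rsimplex[OF s(1)] inB0] by simp
  moreover have "PotO B' = pot n (insert (vv n ?u) ?u)"
    using PotO_orbit[OF lower_rsimplex[OF s'(1)]] s'(3) pot_orbit[OF n3 sg lower_rsimplex[OF s'(1)] inB0'] by simp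
  ultimately show ?thesis using lt by simp
qed

lemma mat_acyclic: "acyclic_matching (quot_faces n G) (quot_less G) (Mat n G)"
  unfolding acyclic_matching_def
proof (intro conjI notI)
  show "partial_matching (quot_faces n G) (quot_less G) (Mat n G)" using mat_partial[OF n3 sg] .
  assume "\<exists>t a b. 2 \<le> t \<and> inj_on b {..<t} \<and> (\<forall>i<t. (a i, b i) \<in> Mat n G \<and> quot_less G (a i) (b (Suc i mod t)))"
  then obtain t a b where t: "2 \<le> t" and inj: "inj_on b {..<t}"
    and h: "\<forall>i<t. (a i, b i) \<in> Mat n G \<and> quot_less G (a i) (b (Suc i mod t))" by blast
  have "\<forall>i<t. PotO (b i) < PotO (b (Suc i mod t))"
  proof (intro allI impI)
    fix i assume i: "i < t"
    have j: "Suc i mod t < t" using t by simp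
    have ij: "Suc i mod t \<noteq> i"
    proof (cases "Suc i < t")
      case True then show ?thesis by simp
    next
      case False
      then have "Suc i = t" using i by simp
      then show ?thesis using t by simp
    qed
    have ne: "b i \<noteq> b (Suc i mod t)" using inj i j ij unfolding inj_on_def by blast
    have hi: "(a i, b i) \<in> Mat n G" "quot_less G (a i) (b (Suc i mod t))" using h i by auto
    have hj: "(a (Suc i mod t), b (Suc i mod t)) \<in> Mat n G" using h j by auto
    show "PotO (b i) < PotO (b (Suc i mod t))"
      using mat_step[OF hi(1) hj hi(2) ne] .
  qed
  then show False using no_cycle[OF t, of "\<lambda>i. PotO (b i)"] by simp
qed

lemma alpha_simplex: "simplex n {alpha n}"
proof -
  have a: "(1::nat) \<in> {1}" by simp
  have b: "{1} \<subseteq> {1..n}" using n3 by simp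
  have c: "{1} \<noteq> {1..n}"
  proof
    assume "{1} = {1..n}"
    then have "n \<in> {1}" using n3 by simp
    then show False using n3 by simp
  qed
  have "proper_partition n (alphaC n {1})" using alphaC_proper[OF n3 a b c] .
  then have "proper_partition n (alpha n)" using alphaC_1[OF n3] by simp
  then show ?thesis unfolding simplex_def using refines_refl by simp
qed

lemma mat_critical: "critical (quot_faces n G) (Mat n G) = orbit G ` C_simp n \<union> {orbit G {alpha n}}"
proof
  show "critical (quot_faces n G) (Mat n G) \<subseteq> orbit G ` C_simp n \<union> {orbit G {alpha n}}"
  proof
    fix X assume X: "X \<in> critical (quot_faces n G) (Mat n G)"
    then obtain s where s: "simplex n s" "X = orbit G s" unfolding critical_def quot_faces_def by blast
    have un: "\<forall>(a, b)\<in>Mat n G. X \<noteq> a \<and> X \<noteq> b" using X unfolding critical_def by simp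
    have nl: "\<not> lower n s"
    proof
      assume "lower n s"
      then have "(orbit G s, orbit G (insert (vv n s) s)) \<in> Mat n G" unfolding Mat_def by blast
      then show False using un s(2) by blast
    qed
    have nu: "\<not> upper n s"
    proof
      assume "upper n s"
      then obtain u where u: "lower n u" "s = insert (vv n u) u" unfolding upper_def by blast
      then have "(orbit G u, orbit G s) \<in> Mat n G" unfolding Mat_def by blast
      then show False using un s(2) by blast
    qed
    have "crit n s" using crit_iff[OF n3 s(1)] nl nu by simp
    then show "X \<in> orbit G ` C_simp n \<union> {orbit G {alpha n}}" using s(2) unfolding crit_def by blast
  qed
  show "orbit G ` C_simp n \<union> {orbit G {alpha n}} \<subseteq> critical (quot_faces n G) (Mat n G)"
  proof
    fix X assume X: "X \<in> orbit G ` C_simp n \<union> {orbit G {alpha n}}"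
    then obtain s where s: "X = orbit G s" "crit n s" unfolding crit_def by auto
    have sx: "simplex n s" using s(2) alpha_simplex unfolding crit_def C_simp_def by blast
    have nl: "\<not> lower n s" and nu: "\<not> upper n s" using crit_iff[OF n3 sx] s(2) by auto
    have XS: "X \<in> quot_faces n G" unfolding quot_faces_def using sx s(1) by blast
    have "\<forall>(a, b)\<in>Mat n G. X \<noteq> a \<and> X \<noteq> b"
    proof (intro ballI)
      fix p assume p: "p \<in> Mat n G"
      then obtain u where u: "lower n u" "p = (orbit G u, orbit G (insert (vv n u) u))" unfolding Mat_def by blast
      have "X \<noteq> orbit G u"
      proof
        assume "X = orbit G u"
        moreover have "s \<in> orbit G s" by (rule orbit_self[OF n3 sg])
        ultimately have "s \<in> orbit G u" using s(1) by simp
        then obtain g where g: "g \<in> G" "s = act_simp g u" using orbit_mem[OF n3 sg] by blast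
        then have "lower n s" using lower_G[OF n3 sg g(1) u(1)] by simp
        then show False using nl by simp
      qed
      moreover have "X \<noteq> orbit G (insert (vv n u) u)"
      proof
        assume "X = orbit G (insert (vv n u) u)"
        moreover have "s \<in> orbit G s" by (rule orbit_self[OF n3 sg])
        ultimately have "s \<in> orbit G (insert (vv n u) u)" using s(1) by simp
        then obtain g where g: "g \<in> G" "s = act_simp g (insert (vv n u) u)" using orbit_mem[OF n3 sg] by blast
        then have "upper n s" using upper_G[OF n3 sg g(1)] u(1) unfolding upper_def by blast
        then show False using nu by simp
      qed
      ultimately show "case p of (a, b) \<Rightarrow> X \<noteq> a \<and> X \<noteq> b" using u(2) by simp
    qed
    then show "X \<in> critical (quot_faces n G) (Mat n G)" unfolding critical_def using XS by blast
  qed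
qed

end

theorem corollary13:
  fixes n :: nat and G :: "(nat \<Rightarrow> nat) set"
  assumes "n \<ge> 3" and "subgroup_S1_Snm1 n G"
  shows "\<exists>M. acyclic_matching (quot_faces n G) (quot_less G) M
           \<and> critical (quot_faces n G) M
               = orbit G ` C_simp n \<union> {orbit G {alpha n}}"
  using mat_acyclic[OF assms] mat_critical[OF assms] by blast


end
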